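(* Let $p$ be a prime, $\mathbb{F}_p$ the field with $p$ elements, $n\ge 2$ and $1\le m\le n-1$ integers. For any real $\alpha$ with $\min\{m,n-m\}<\alpha\le m(n-m)$, there exists a subset $G\subset G(n,n-m)$ with $|G|\approx p^{\alpha}$ such that for every set $E\subset\mathbb{F}_p^n$ and every $N>0$, \[ |\{W\in G:\ |\pi^{W}(E)|\le N\}|\lesssim |G|\,N\,(|E|^{-1}+p^{-m}). \]
   Context: $G(n,k)$ denotes the set of all $k$-dimensional linear subspaces of $\mathbb{F}_p^n$. For a nontrivial subspace $W$ and $E\subset\mathbb{F}_p^n$, $\pi^{W}(E)=\{x+W:\ E\cap(x+W)\neq\emptyset,\ x\in\mathbb{F}_p^n\}$ is the set of cosets of $W$ meeting $E$, and $|\pi^W(E)|$ its cardinality. $|J|$ denotes cardinality. $f\lesssim g$ means $f\le Cg$ for a constant $C$ independent of $p$, $E$, $N$ (depending only on $n,m,\alpha$); $f\approx g$ means $f\lesssim g$ and $g\lesssim f$. *)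

theory Defs
  imports Complex_Main "HOL-Computational_Algebra.Primes"
begin

text \<open>The vector space F_p^n, realised concretely: vectors are functions nat => nat with
  coordinates i < n taking values in {0..<p} (representatives of F_p) and all coordinates
  i >= n equal to 0. Arithmetic is performed modulo p.\<close>

definition Fpn :: "nat \<Rightarrow> nat \<Rightarrow> (nat \<Rightarrow> nat) set" where
  "Fpn p n = {x. (\<forall>i<n. x i < p) \<and> (\<forall>i\<ge>n. x i = 0)}"

definition vadd :: "nat \<Rightarrow> (nat \<Rightarrow> nat) \<Rightarrow> (nat \<Rightarrow> nat) \<Rightarrow> (nat \<Rightarrow> nat)" where
  "vadd p x y = (\<lambda>i. (x i + y i) mod p)"

definition lincomb :: "nat \<Rightarrow> nat list \<Rightarrow> (nat \<Rightarrow> nat) list \<Rightarrow> (nat \<Rightarrow> nat)" where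
  "lincomb p cs vs = (\<lambda>i. (\<Sum>j<length vs. cs ! j * (vs ! j) i) mod p)"

definition fspan :: "nat \<Rightarrow> (nat \<Rightarrow> nat) list \<Rightarrow> (nat \<Rightarrow> nat) set" where
  "fspan p vs = {lincomb p cs vs | cs. length cs = length vs \<and> (\<forall>c\<in>set cs. c < p)}"

definition lin_indep :: "nat \<Rightarrow> (nat \<Rightarrow> nat) list \<Rightarrow> bool" where
  "lin_indep p vs \<longleftrightarrow>
     (\<forall>cs. length cs = length vs \<and> (\<forall>c\<in>set cs. c < p) \<and> lincomb p cs vs = (\<lambda>_. 0)
           \<longrightarrow> (\<forall>c\<in>set cs. c = 0))"

definition Grass :: "nat \<Rightarrow> nat \<Rightarrow> nat \<Rightarrow> (nat \<Rightarrow> nat) set set" where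
  "Grass p n k = {fspan p vs | vs. length vs = k \<and> set vs \<subseteq> Fpn p n \<and> lin_indep p vs}"

definition coset :: "nat \<Rightarrow> (nat \<Rightarrow> nat) \<Rightarrow> (nat \<Rightarrow> nat) set \<Rightarrow> (nat \<Rightarrow> nat) set" where
  "coset p x W = vadd p x ` W"

definition proj :: "nat \<Rightarrow> nat \<Rightarrow> (nat \<Rightarrow> nat) set \<Rightarrow> (nat \<Rightarrow> nat) set \<Rightarrow> (nat \<Rightarrow> nat) set set" where
  "proj p n W E = {coset p x W | x. x \<in> Fpn p n \<and> E \<inter> coset p x W \<noteq> {}}"

end

theory Submission
  imports Defs "HOL-Computational_Algebra.Polynomial" "HOL-Library.FuncSet"
begin


lemma Fpn_Suc: "Fpn p (Suc k) = (\<lambda>(x,a). x(k:=a)) ` (Fpn p k \<times> {..<p})"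
proof (rule set_eqI, rule iffI)
  fix y assume y: "y \<in> Fpn p (Suc k)"
  have "y(k:=0) \<in> Fpn p k" "y k < p" using y unfolding Fpn_def by auto
  moreover have "y = (y(k:=0))(k := y k)" by simp
  ultimately show "y \<in> (\<lambda>(x,a). x(k:=a)) ` (Fpn p k \<times> {..<p})"
    by (intro image_eqI[where x="(y(k:=0), y k)"]) auto
next
  fix y assume "y \<in> (\<lambda>(x,a). x(k:=a)) ` (Fpn p k \<times> {..<p})"
  then show "y \<in> Fpn p (Suc k)" unfolding Fpn_def by (auto simp: less_Suc_eq)
qed

lemma Fpn_card: "finite (Fpn p k) \<and> card (Fpn p k) = p ^ k"
proof (induction k)
  case 0
  have "Fpn p 0 = {\<lambda>_. 0}" unfolding Fpn_def by auto
  then show ?case by simp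
next
  case (Suc k)
  have inj: "inj_on (\<lambda>(x,a). x(k:=a)) (Fpn p k \<times> {..<p})"
  proof (rule inj_onI, clarsimp)
    fix x a y b assume "x \<in> Fpn p k" "y \<in> Fpn p k" "x(k := a) = y(k := b)"
    then show "x = y \<and> a = b" unfolding Fpn_def
    proof -
      assume H: "x \<in> {x. (\<forall>i<k. x i < p) \<and> (\<forall>i\<ge>k. x i = 0)}" "y \<in> {x. (\<forall>i<k. x i < p) \<and> (\<forall>i\<ge>k. x i = 0)}" "x(k := a) = y(k := b)"
      have "a = b" using fun_cong[OF H(3), of k] by simp
      moreover have "x i = y i" for i
      proof (cases "i = k")
        case False
        have "(x(k := a)) i = (y(k := b)) i" using H(3) by simp
        then show ?thesis using False by simp
      qed (use H in auto)
      ultimately show ?thesis by auto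
    qed
  qed
  show ?case using Suc inj by (simp add: Fpn_Suc card_image card_cartesian_product)
qed

lemma finite_Fpn[simp]: "finite (Fpn p k)" using Fpn_card by blast
lemma card_Fpn[simp]: "card (Fpn p k) = p ^ k" using Fpn_card by blast

lemma Fpn_zero: "p > 0 \<Longrightarrow> (\<lambda>_. 0) \<in> Fpn p k" unfolding Fpn_def by auto

lemma inv_mod:
  assumes "prime p" "\<not> int p dvd a"
  shows "\<exists>w. (a * w) mod int p = 1"
proof -
  have pr: "prime (int p)" using assms(1) by simp
  have "coprime (int p) a" using prime_imp_coprime[OF pr assms(2)] .
  then have g: "gcd (int p) a = 1" by simp
  obtain u v where "u * int p + v * a = gcd (int p) a" using bezout_int by blast
  then have e: "a * v = 1 - u * int p" using g by (simp add: algebra_simps)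
  have "p > 1" using prime_gt_1_nat[OF assms(1)] by simp
  have "(1 + (- u) * int p) mod int p = 1 mod int p" by (rule mod_mult_self1)
  then have "(a * v) mod int p = 1"
    unfolding e using \<open>p > 1\<close> by simp
  then show ?thesis by blast
qed

lemma sum_upd_split:
  fixes z :: "nat \<Rightarrow> int"
  assumes "j < b"
  shows "(\<Sum>l<b. z l * int (r l)) = (\<Sum>l<b. z l * int ((r(j:=0)) l)) + z j * int (r j)"
proof -
  have "(\<Sum>l<b. z l * int (r l)) = (\<Sum>l<b. z l * int ((r(j:=0)) l) + (if l = j then z j * int (r j) else 0))"
    by (rule sum.cong) simp_all
  also have "\<dots> = (\<Sum>l<b. z l * int ((r(j:=0)) l)) + z j * int (r j)"
    using assms by (simp add: sum.distrib)
  finally show ?thesis .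
qed

lemma slice:
  assumes pr: "prime p" and jb: "j < b" and RF: "R \<subseteq> Fpn p b"
    and cl: "\<And>r a. r \<in> R \<Longrightarrow> a < p \<Longrightarrow> r(j:=a) \<in> R"
    and zj: "\<not> int p dvd z j"
  shows "card {r\<in>R. (\<Sum>l<b. z l * int (r l)) mod int p = c mod int p} * p = card R"
proof -
  have p1: "p > 1" using prime_gt_1_nat[OF pr] by simp
  have finR: "finite R" using finite_subset[OF RF finite_Fpn] .
  define R0 where "R0 = {r\<in>R. r j = 0}"
  have finR0: "finite R0" using finR R0_def by simp
    have R_eq: "R = (\<lambda>(a,r0). r0(j:=a)) ` ({..<p} \<times> R0)"
  proof (rule set_eqI, rule iffI)
    fix r assume r: "r \<in> R"
    have "r j < p" using r RF jb unfolding Fpn_def by auto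
    moreover have "r(j:=0) \<in> R0" using cl[OF r] p1 unfolding R0_def by auto
    ultimately show "r \<in> (\<lambda>(a,r0). r0(j:=a)) ` ({..<p} \<times> R0)"
      by (intro image_eqI[where x="(r j, r(j:=0))"]) auto
  next
    fix r assume "r \<in> (\<lambda>(a,r0). r0(j:=a)) ` ({..<p} \<times> R0)"
    then show "r \<in> R" using cl unfolding R0_def by auto
  qed
  have inj1: "inj_on (\<lambda>(a,r0). r0(j:=a)) ({..<p} \<times> R0)"
  proof (rule inj_onI, clarsimp)
    fix a r0 a' r0' assume H: "r0 \<in> R0" "r0' \<in> R0" "r0(j := a) = r0'(j := a')"
    have "a = a'" using fun_cong[OF H(3), of j] by simp
    moreover have "r0 i = r0' i" for i
    proof (cases "i = j")
      case False
      have "(r0(j := a)) i = (r0'(j := a')) i" using H(3) by simp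
      then show ?thesis using False by simp
    qed (use H R0_def in auto)
    ultimately show "a = a' \<and> r0 = r0'" by auto
  qed
  have cardR: "card R = p * card R0"
    using R_eq inj1 by (simp add: card_image card_cartesian_product)
    obtain w where w: "(z j * w) mod int p = 1" using inv_mod[OF pr zj] by blast
  define g where "g r0 = nat (((c - (\<Sum>l<b. z l * int (r0 l))) * w) mod int p)" for r0
  have g_lt: "g r0 < p" for r0 using p1 unfolding g_def by (simp add: nat_less_iff)
  have g_int: "int (g r0) = ((c - (\<Sum>l<b. z l * int (r0 l))) * w) mod int p" for r0
    using p1 unfolding g_def by simp
  let ?Sol = "{r\<in>R. (\<Sum>l<b. z l * int (r l)) mod int p = c mod int p}"
  have Sol_eq: "?Sol = (\<lambda>r0. r0(j := g r0)) ` R0"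
  proof (rule set_eqI, rule iffI)
    fix r assume r: "r \<in> ?Sol"
    define r0 where "r0 = r(j:=0)"
    have r0R0: "r0 \<in> R0" using cl r p1 unfolding R0_def r0_def by auto
    have S: "(\<Sum>l<b. z l * int (r l)) = (\<Sum>l<b. z l * int (r0 l)) + z j * int (r j)"
      unfolding r0_def by (rule sum_upd_split[OF jb])
    have rjp: "r j < p" using r RF jb unfolding Fpn_def by auto
    have rs: "(\<Sum>l<b. z l * int (r l)) mod int p = c mod int p" using r by blast
    have zr: "z j * int (r j) = (\<Sum>l<b. z l * int (r l)) - (\<Sum>l<b. z l * int (r0 l))" using S by simp
    have "(z j * int (r j)) mod int p = (c - (\<Sum>l<b. z l * int (r0 l))) mod int p"
      unfolding zr by (rule mod_diff_cong[OF rs refl])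
    then have "(z j * int (r j) * w) mod int p = ((c - (\<Sum>l<b. z l * int (r0 l))) * w) mod int p"
      by (rule mod_mult_cong[OF _ refl])
    moreover have "(z j * int (r j) * w) mod int p = int (r j)"
    proof -
      have "(z j * int (r j) * w) mod int p = ((z j * w) * int (r j)) mod int p"
        by (simp add: algebra_simps)
      also have "\<dots> = ((z j * w) mod int p * int (r j)) mod int p"
        by (simp add: mod_mult_left_eq)
      also have "\<dots> = int (r j)" using w rjp by simp
      finally show ?thesis .
    qed
    ultimately have "int (r j) = int (g r0)" using g_int by simp
    then have "r j = g r0" by simp
    then have "r = r0(j := g r0)" unfolding r0_def by auto
    then show "r \<in> (\<lambda>r0. r0(j := g r0)) ` R0" using r0R0 by blast
  next
    fix r assume "r \<in> (\<lambda>r0. r0(j := g r0)) ` R0"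
    then obtain r0 where r0: "r0 \<in> R0" and rr: "r = r0(j := g r0)" by blast
    have rR: "r \<in> R" using cl r0 g_lt rr unfolding R0_def by auto
    have r0eq: "r(j:=0) = r0" using rr r0 unfolding R0_def by auto
    have S: "(\<Sum>l<b. z l * int (r l)) = (\<Sum>l<b. z l * int (r0 l)) + z j * int (g r0)"
      using sum_upd_split[OF jb, of z r] r0eq rr by (simp only:) simp
    have "(z j * int (g r0)) mod int p = (z j * ((c - (\<Sum>l<b. z l * int (r0 l))) * w)) mod int p"
      unfolding g_int by (simp add: mod_mult_right_eq)
    also have "\<dots> = ((z j * w) * (c - (\<Sum>l<b. z l * int (r0 l)))) mod int p"
      by (simp add: algebra_simps)
    also have "\<dots> = ((z j * w) mod int p * (c - (\<Sum>l<b. z l * int (r0 l)))) mod int p"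
      by (simp add: mod_mult_left_eq)
    also have "\<dots> = (c - (\<Sum>l<b. z l * int (r0 l))) mod int p" using w by simp
    finally have "(z j * int (g r0)) mod int p = (c - (\<Sum>l<b. z l * int (r0 l))) mod int p" .
    then have "((\<Sum>l<b. z l * int (r0 l)) + z j * int (g r0)) mod int p
       = ((\<Sum>l<b. z l * int (r0 l)) + (c - (\<Sum>l<b. z l * int (r0 l)))) mod int p"
      by (rule mod_add_cong[OF refl])
    then have "(\<Sum>l<b. z l * int (r l)) mod int p = c mod int p"
      unfolding S by simp
    then show "r \<in> ?Sol" using rR by blast
  qed
  have inj2: "inj_on (\<lambda>r0. r0(j := g r0)) R0"
  proof (rule inj_onI)
    fix x y assume "x \<in> R0" "y \<in> R0" "x(j := g x) = y(j := g y)"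
    then have "(x(j := g x))(j:=0) = (y(j := g y))(j:=0)" by simp
    moreover have "x j = 0" "y j = 0" using \<open>x \<in> R0\<close> \<open>y \<in> R0\<close> unfolding R0_def by auto
    ultimately show "x = y" by (simp add: fun_upd_idem)
  qed
  have "card ?Sol = card R0" unfolding Sol_eq using inj2 by (simp add: card_image)
  then show ?thesis using cardR by simp
qed



lemma root_bound_aux:
  fixes f :: "int poly"
  assumes pr: "prime p" and fin: "finite X" and roots: "\<forall>x\<in>X. int p dvd poly f x"
    and dist: "\<forall>x\<in>X. \<forall>y\<in>X. x \<noteq> y \<longrightarrow> \<not> int p dvd (x - y)"
    and deg: "degree f < card X"
  shows "\<exists>g. f = smult (int p) g"
  using fin roots dist deg
proof (induction "degree f" arbitrary: f X)
  case 0
  then obtain x where x: "x \<in> X" by fastforce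
  have fc: "f = [:coeff f 0:]" using 0(1) by (metis degree_0_id)
  have "poly f x = coeff f 0" by (subst fc) simp
  then have "int p dvd coeff f 0" using 0(3) x by metis
  then obtain k where "coeff f 0 = int p * k" by blast
  then have "f = smult (int p) [:k:]" using fc by simp
  then show ?case by blast
next
  case (Suc n)
  then obtain r where r: "r \<in> X" by fastforce
  define q where "q = synthetic_div f r"
  have fq: "f = [:-r, 1:] * q + [:poly f r:]" unfolding q_def by (rule synthetic_div_correct'[symmetric])
  have dq: "n = degree q" unfolding q_def using Suc(2) by (simp add: degree_synthetic_div)
  have pr': "prime (int p)" using pr by simp
  have rootq: "\<forall>x\<in>X-{r}. int p dvd poly q x"
  proof
    fix x assume x: "x \<in> X - {r}"
    have "poly f x = (x - r) * poly q x + poly f r"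
      by (subst fq) (simp add: algebra_simps)
    then have "int p dvd (x - r) * poly q x"
      using Suc(4) x r by (metis DiffD1 add_diff_cancel_right' dvd_diff)
    moreover have "\<not> int p dvd (x - r)" using Suc(5) x r by blast
    ultimately show "int p dvd poly q x" using prime_dvd_mult_iff[OF pr'] by blast
  qed
  have "degree q < card (X - {r})" using Suc(2,3,6) r dq by simp
  then obtain g where g: "q = smult (int p) g"
    using Suc(1)[OF dq, of "X - {r}"] Suc(3,5) rootq by blast
  obtain k where k: "poly f r = int p * k" using Suc(4) r by blast
  have "f = smult (int p) ([:-r, 1:] * g + [:k:])"
    using fq g k by (simp add: smult_add_right)
  then show ?case by blast
qed

lemma root_count:
  fixes v :: "nat \<Rightarrow> int"
  assumes pr: "prime p" and nz: "q0 < d" "\<not> int p dvd v q0"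
  shows "card {s. s < p \<and> ((\<Sum>q<d. v q * int s ^ Suc q) + e) mod int p = 0} \<le> d"
proof (rule ccontr)
  let ?Y = "{s. s < p \<and> ((\<Sum>q<d. v q * int s ^ Suc q) + e) mod int p = 0}"
  assume big: "\<not> card ?Y \<le> d"
  define f where "f = (\<Sum>q<d. monom (v q) (Suc q)) + [:e:]"
  have polyf: "poly f x = (\<Sum>q<d. v q * x ^ Suc q) + e" for x
    unfolding f_def by (simp add: poly_sum poly_monom)
  have coeff_f: "coeff f (Suc q0) = v q0"
  proof -
    have "coeff f (Suc q0) = (\<Sum>q<d. coeff (monom (v q) (Suc q)) (Suc q0))"
      unfolding f_def by (simp add: coeff_sum)
    also have "\<dots> = (\<Sum>q<d. if q = q0 then v q else 0)"
      by (rule sum.cong) (auto simp: coeff_monom)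
    also have "\<dots> = v q0" using nz(1) by simp
    finally show ?thesis .
  qed
  have degf: "degree f \<le> d"
  proof -
    have "degree (\<Sum>q<d. monom (v q) (Suc q)) \<le> d"
    proof (rule degree_sum_le)
      fix q assume "q \<in> {..<d}"
      then show "degree (monom (v q) (Suc q)) \<le> d" using degree_monom_le[of "v q" "Suc q"] by simp
    qed simp
    then show ?thesis unfolding f_def using degree_add_le by fastforce
  qed
  define X where "X = int ` ?Y"
  have finY: "finite ?Y" by simp
  have cX: "card X = card ?Y" unfolding X_def by (simp add: card_image)
  have "\<exists>g. f = smult (int p) g"
  proof (rule root_bound_aux[OF pr])
    show "finite X" unfolding X_def by simp
    show "\<forall>x\<in>X. int p dvd poly f x" unfolding X_def polyf by auto
    show "\<forall>x\<in>X. \<forall>y\<in>X. x \<noteq> y \<longrightarrow> \<not> int p dvd (x - y)"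
    proof (intro ballI impI)
      fix x y assume "x \<in> X" "y \<in> X" "x \<noteq> y"
      then obtain s t where st: "x = int s" "y = int t" "s < p" "t < p" unfolding X_def by auto
      show "\<not> int p dvd (x - y)"
      proof
        assume d: "int p dvd (x - y)"
        have "int s mod int p = int t mod int p" unfolding mod_eq_dvd_iff using d st by simp
        then show False using st \<open>x \<noteq> y\<close> by simp
      qed
    qed
    show "degree f < card X" using cX big degf by simp
  qed
  then obtain g where "f = smult (int p) g" by blast
  then have "coeff f (Suc q0) = int p * coeff g (Suc q0)" by simp
  then show False using coeff_f nz(2) by simp
qed



definition curv :: "nat \<Rightarrow> nat \<Rightarrow> nat \<Rightarrow> nat \<Rightarrow> nat" where
  "curv p q s c = (s ^ Suc q + (if q = 1 then c else 0)) mod p"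

definition comb :: "nat \<Rightarrow> nat \<Rightarrow> nat \<Rightarrow> (nat \<Rightarrow> nat) \<Rightarrow> nat \<Rightarrow> nat \<Rightarrow> (nat \<Rightarrow> nat)" where
  "comb p h b \<tau> s c = (\<lambda>l. if l < h then \<tau> l else if l < b then curv p (l - h) s c else 0)"

definition Rset :: "nat \<Rightarrow> nat \<Rightarrow> nat \<Rightarrow> nat \<Rightarrow> (nat \<Rightarrow> nat) set" where
  "Rset p h b t = (\<lambda>(\<tau>,s,c). comb p h b \<tau> s c) ` (Fpn p h \<times> ({..<p} \<times> {..<t}))"

lemma nat_mod_add_cancel:
  fixes a c c' p :: nat
  assumes "(a + c) mod p = (a + c') mod p"
  shows "c mod p = c' mod p"
proof -
  have "int ((a + c) mod p) = int ((a + c') mod p)" using assms by simp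
  then have "(int a + int c) mod int p = (int a + int c') mod int p" by (simp add: of_nat_mod)
  then have "int p dvd (int c - int c')" by (simp add: mod_eq_dvd_iff)
  then have "int c mod int p = int c' mod int p" by (simp add: mod_eq_dvd_iff)
  then show ?thesis by (metis of_nat_eq_iff of_nat_mod)
qed

lemma Rset_sub:
  assumes "p > 0" "h \<le> b"
  shows "Rset p h b t \<subseteq> Fpn p b"
  using assms unfolding Rset_def comb_def curv_def Fpn_def by auto

lemma comb_inj0:
  assumes hb: "h + 2 \<le> b" and tp: "t \<le> p"
  assumes A: "\<tau> \<in> Fpn p h" "s \<in> {..<p}" "c \<in> {..<t}" "\<tau>' \<in> Fpn p h" "s' \<in> {..<p}" "c' \<in> {..<t}"
    and E: "comb p h b \<tau> s c = comb p h b \<tau>' s' c'"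
  shows "\<tau> = \<tau>' \<and> s = s' \<and> c = c'"
proof -
  have e: "comb p h b \<tau> s c l = comb p h b \<tau>' s' c' l" for l using E by simp
  have "\<tau> l = \<tau>' l" for l
  proof (cases "l < h")
    case True then show ?thesis using e[of l] unfolding comb_def by simp
  next
    case False then show ?thesis using A unfolding Fpn_def by auto
  qed
  then have t1: "\<tau> = \<tau>'" by blast
  have "curv p 0 s c = curv p 0 s' c'" using e[of h] hb unfolding comb_def by simp
  then have s1: "s = s'" using A unfolding curv_def by simp
  have "curv p 1 s c = curv p 1 s' c'" using e[of "Suc h"] hb unfolding comb_def by simp
  then have "(s^2 + c) mod p = (s^2 + c') mod p" using s1 unfolding curv_def by (simp add: power2_eq_square)
  then have "c mod p = c' mod p" by (rule nat_mod_add_cancel)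
  then have "c = c'" using A tp by simp
  then show "\<tau> = \<tau>' \<and> s = s' \<and> c = c'" using t1 s1 by simp
qed

lemma comb_inj:
  assumes hb: "h + 2 \<le> b" and tp: "t \<le> p"
  shows "inj_on (\<lambda>(\<tau>,s,c). comb p h b \<tau> s c) (Fpn p h \<times> ({..<p} \<times> {..<t}))"
  unfolding inj_on_def using comb_inj0[OF hb tp] by fast

lemma Rset_card:
  assumes "h + 2 \<le> b" "t \<le> p"
  shows "card (Rset p h b t) = p ^ Suc h * t"
  unfolding Rset_def using comb_inj[OF assms]
  by (simp add: card_image card_cartesian_product)

lemma comb_sum_mod:
  fixes v :: "nat \<Rightarrow> int"
  assumes hb: "h + 2 \<le> b" and vh: "\<forall>j<h. int p dvd v j"
  shows "(\<Sum>l<b. v l * int (comb p h b \<tau> s c l)) mod int p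
       = ((\<Sum>q<b-h. v (h+q) * int s ^ Suc q) + v (h+1) * int c) mod int p"
proof -
  let ?f = "\<lambda>l. v l * int (comb p h b \<tau> s c l)"
  have U: "{..<b} = {..<h} \<union> {h..<b}" using hb by auto
  have S1: "(\<Sum>l<b. ?f l) = (\<Sum>l<h. ?f l) + (\<Sum>l\<in>{h..<b}. ?f l)"
    unfolding U by (rule sum.union_disjoint) auto
  have S2: "int p dvd (\<Sum>l<h. ?f l)"
    by (rule dvd_sum) (use vh in auto)
  have S3: "(\<Sum>l\<in>{h..<b}. ?f l) = (\<Sum>q<b-h. ?f (h+q))"
  proof -
    have im: "{h..<b} = (\<lambda>q. h+q) ` {..<b-h}"
    proof
      show "{h..<b} \<subseteq> (\<lambda>q. h+q) ` {..<b-h}"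
      proof
        fix l assume "l \<in> {h..<b}"
        then show "l \<in> (\<lambda>q. h+q) ` {..<b-h}" by (intro image_eqI[where x="l-h"]) auto
      qed
    qed auto
    show ?thesis unfolding im by (subst sum.reindex) (auto simp: inj_on_def)
  qed
  have S4: "(\<Sum>q<b-h. ?f (h+q)) = (\<Sum>q<b-h. v (h+q) * int (curv p q s c))"
    by (rule sum.cong) (auto simp: comb_def)
  have S: "(\<Sum>l<b. ?f l) mod int p = (\<Sum>q<b-h. v (h+q) * int (curv p q s c)) mod int p"
  proof -
    have "(\<Sum>l<b. ?f l) mod int p = ((\<Sum>l<h. ?f l) mod int p + (\<Sum>l\<in>{h..<b}. ?f l)) mod int p"
      unfolding S1 by (simp add: mod_add_left_eq)
    also have "(\<Sum>l<h. ?f l) mod int p = 0" using S2 by simp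
    finally show ?thesis using S3 S4 by simp
  qed
  have "(\<Sum>q<b-h. v (h+q) * int (curv p q s c)) mod int p
      = (\<Sum>q<b-h. (v (h+q) * int (curv p q s c)) mod int p) mod int p"
    by (simp add: mod_sum_eq)
  also have "\<dots> = (\<Sum>q<b-h. (v (h+q) * (int s ^ Suc q + (if q = 1 then int c else 0))) mod int p) mod int p"
  proof -
    have "(v (h+q) * int (curv p q s c)) mod int p = (v (h+q) * (int s ^ Suc q + (if q = 1 then int c else 0))) mod int p" for q
    proof -
      have "int (curv p q s c) = (int s ^ Suc q + (if q = 1 then int c else 0)) mod int p"
        unfolding curv_def by (simp add: of_nat_mod)
      then show ?thesis by (simp add: mod_mult_right_eq)
    qed
    then show ?thesis by simp
  qed
  also have "\<dots> = (\<Sum>q<b-h. v (h+q) * (int s ^ Suc q + (if q = 1 then int c else 0))) mod int p"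
    by (simp add: mod_sum_eq)
  also have "(\<Sum>q<b-h. v (h+q) * (int s ^ Suc q + (if q = 1 then int c else 0)))
      = (\<Sum>q<b-h. v (h+q) * int s ^ Suc q) + (\<Sum>q<b-h. if q = 1 then v (h+q) * int c else 0)"
  proof -
    have "(\<Sum>q<b-h. v (h+q) * (int s ^ Suc q + (if q = 1 then int c else 0)))
      = (\<Sum>q<b-h. v (h+q) * int s ^ Suc q + (if q = 1 then v (h+q) * int c else 0))"
      by (rule sum.cong) (simp_all add: distrib_left)
    then show ?thesis by (simp only: sum.distrib)
  qed
  also have "(\<Sum>q<b-h. if q = 1 then v (h+q) * int c else 0) = v (h+1) * int c"
    using hb by simp
  finally show ?thesis using S by simp
qed

lemma Rset_hyp:
  fixes v :: "nat \<Rightarrow> int"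
  assumes pr: "prime p" and hb: "h + 2 \<le> b" and tp: "t \<le> p"
    and nz: "l0 < b" "\<not> int p dvd v l0"
  shows "card {r\<in>Rset p h b t. (\<Sum>l<b. v l * int (r l)) mod int p = cc mod int p} * p
         \<le> (b - h) * card (Rset p h b t)"
proof -
  have p0: "p > 0" using prime_gt_1_nat[OF pr] by simp
  let ?R = "Rset p h b t"
  let ?Sol = "{r\<in>?R. (\<Sum>l<b. v l * int (r l)) mod int p = cc mod int p}"
  show ?thesis
  proof (cases "\<exists>j<h. \<not> int p dvd v j")
    case True
    then obtain j where j: "j < h" "\<not> int p dvd v j" by blast
    have cl: "r(j:=a) \<in> ?R" if r: "r \<in> ?R" and a: "a < p" for r a
    proof -
      obtain \<tau> s c where tsc: "\<tau> \<in> Fpn p h" "s < p" "c < t" "r = comb p h b \<tau> s c"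
        using r unfolding Rset_def by auto
      have "r(j:=a) = comb p h b (\<tau>(j:=a)) s c"
        using tsc(4) j(1) unfolding comb_def by auto
      moreover have "\<tau>(j:=a) \<in> Fpn p h" using tsc(1) j(1) a unfolding Fpn_def by auto
      ultimately show ?thesis using tsc unfolding Rset_def
        by (intro image_eqI[where x="(\<tau>(j:=a), s, c)"]) auto
    qed
    have jb: "j < b" using j hb by simp
    have hb': "h \<le> b" using hb by simp
    have "card ?Sol * p = card ?R"
      by (rule slice[where z=v and c=cc and R="Rset p h b t", OF pr jb Rset_sub[OF p0 hb'] cl j(2)])
    moreover have "b - h \<ge> 1" using hb by simp
    ultimately show ?thesis by simp
  next
    case False
    then have vh: "\<forall>j<h. int p dvd v j" by blast
    have l0h: "l0 \<ge> h" using vh nz by (meson not_le)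
    define d where "d = b - h"
    define e where "e c = v (h+1) * int c - cc" for c
    define X2 where "X2 = {(s,c). s < p \<and> c < t \<and> ((\<Sum>q<d. v (h+q) * int s ^ Suc q) + e c) mod int p = 0}"
    have sub: "?Sol \<subseteq> (\<lambda>(\<tau>,s,c). comb p h b \<tau> s c) ` (Fpn p h \<times> X2)"
    proof
      fix r assume r: "r \<in> ?Sol"
      then obtain \<tau> s c where tsc: "\<tau> \<in> Fpn p h" "s < p" "c < t" "r = comb p h b \<tau> s c"
        unfolding Rset_def by auto
      have "((\<Sum>q<d. v (h+q) * int s ^ Suc q) + v (h+1) * int c) mod int p = cc mod int p"
        using r comb_sum_mod[OF hb vh, of \<tau> s c] tsc(4) unfolding d_def by simp
      then have "((\<Sum>q<d. v (h+q) * int s ^ Suc q) + e c) mod int p = 0"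
        unfolding e_def by (simp add: mod_eq_dvd_iff dvd_eq_mod_eq_0[symmetric] algebra_simps)
      then have "(s,c) \<in> X2" using tsc unfolding X2_def by simp
      then show "r \<in> (\<lambda>(\<tau>,s,c). comb p h b \<tau> s c) ` (Fpn p h \<times> X2)"
        using tsc by force
    qed
    have X2sub: "X2 \<subseteq> (\<Union>c<t. (\<lambda>s. (s,c)) ` {s. s < p \<and> ((\<Sum>q<d. v (h+q) * int s ^ Suc q) + e c) mod int p = 0})"
      unfolding X2_def by auto
    have q0: "l0 - h < d" "\<not> int p dvd v (h + (l0 - h))" using nz l0h unfolding d_def by auto
    have cX2: "card X2 \<le> t * d"
    proof -
      have "card X2 \<le> card (\<Union>c<t. (\<lambda>s. (s,c)) ` {s. s < p \<and> ((\<Sum>q<d. v (h+q) * int s ^ Suc q) + e c) mod int p = 0})"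
        by (rule card_mono[OF _ X2sub]) auto
      also have "\<dots> \<le> (\<Sum>c<t. card ((\<lambda>s. (s,c)) ` {s. s < p \<and> ((\<Sum>q<d. v (h+q) * int s ^ Suc q) + e c) mod int p = 0}))"
        by (rule card_UN_le) simp
      also have "\<dots> \<le> (\<Sum>c<t. d)"
      proof (rule sum_mono)
        fix c
        have "card ((\<lambda>s. (s,c)) ` {s. s < p \<and> ((\<Sum>q<d. v (h+q) * int s ^ Suc q) + e c) mod int p = 0})
          \<le> card {s. s < p \<and> ((\<Sum>q<d. v (h+q) * int s ^ Suc q) + e c) mod int p = 0}"
          by (rule card_image_le) simp
        also have "\<dots> \<le> d"
          by (rule root_count[where v="\<lambda>q. v (h+q)" and e="e c", OF pr q0])
        finally show "card ((\<lambda>s. (s,c)) ` {s. s < p \<and> ((\<Sum>q<d. v (h+q) * int s ^ Suc q) + e c) mod int p = 0}) \<le> d" .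
      qed
      finally show ?thesis by simp
    qed
    have finX2: "finite X2" unfolding X2_def
      by (rule finite_subset[of _ "{..<p} \<times> {..<t}"]) auto
    have "card ?Sol \<le> card ((\<lambda>(\<tau>,s,c). comb p h b \<tau> s c) ` (Fpn p h \<times> X2))"
      by (rule card_mono[OF _ sub]) (simp add: finX2)
    also have "\<dots> \<le> card (Fpn p h \<times> X2)" by (rule card_image_le) (simp add: finX2)
    also have "\<dots> = p ^ h * card X2" by (simp add: card_cartesian_product)
    finally have "card ?Sol * p \<le> p ^ h * card X2 * p" by simp
    also have "\<dots> \<le> p ^ h * (t * d) * p" using cX2 by simp
    also have "\<dots> = d * card ?R" using Rset_card[OF hb tp] by (simp add: algebra_simps)
    finally show ?thesis unfolding d_def .
  qed
qed



definition key :: "nat \<Rightarrow> nat \<Rightarrow> nat \<Rightarrow> (nat \<Rightarrow> nat \<Rightarrow> nat) \<Rightarrow> (nat \<Rightarrow> nat) \<Rightarrow> nat \<Rightarrow> int" where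
  "key p k m M u = (\<lambda>i. if i < m then (int (u (k+i)) - (\<Sum>j<k. int (M i j) * int (u j))) mod int p else 0)"

definition Wsp :: "nat \<Rightarrow> nat \<Rightarrow> nat \<Rightarrow> (nat \<Rightarrow> nat \<Rightarrow> nat) \<Rightarrow> (nat \<Rightarrow> nat) set" where
  "Wsp p k m M = {y \<in> Fpn p (k+m). key p k m M y = (\<lambda>_. 0)}"

definition bv :: "nat \<Rightarrow> nat \<Rightarrow> (nat \<Rightarrow> nat \<Rightarrow> nat) \<Rightarrow> nat \<Rightarrow> (nat \<Rightarrow> nat)" where
  "bv k m M j = (\<lambda>l. if l = j then 1 else if k \<le> l \<and> l < k + m then M (l - k) j else 0)"

lemma lincomb_bv:
  assumes len: "length cs = k" and cp: "\<forall>c\<in>set cs. c < p"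
  shows "lincomb p cs (map (bv k m M) [0..<k]) =
    (\<lambda>l. if l < k then cs ! l else if l < k + m then (\<Sum>j<k. cs ! j * M (l - k) j) mod p else 0)"
proof
  fix l
  have L: "lincomb p cs (map (bv k m M) [0..<k]) l = (\<Sum>j<k. cs ! j * bv k m M j l) mod p"
    unfolding lincomb_def by simp
  show "lincomb p cs (map (bv k m M) [0..<k]) l =
    (if l < k then cs ! l else if l < k + m then (\<Sum>j<k. cs ! j * M (l - k) j) mod p else 0)"
  proof (cases "l < k")
    case True
    have "(\<Sum>j<k. cs ! j * bv k m M j l) = (\<Sum>j<k. if j = l then cs ! l else 0)"
      by (rule sum.cong) (use True in \<open>auto simp: bv_def\<close>)
    also have "\<dots> = cs ! l" using True by simp
    finally have "lincomb p cs (map (bv k m M) [0..<k]) l = cs ! l mod p" using L by simp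
    moreover have "cs ! l < p" using cp len True by auto
    ultimately show ?thesis using True by simp
  next
    case False
    have "(\<Sum>j<k. cs ! j * bv k m M j l) = (\<Sum>j<k. cs ! j * (if l < k + m then M (l - k) j else 0))"
      by (rule sum.cong) (use False in \<open>auto simp: bv_def\<close>)
    then show ?thesis using L False by auto
  qed
qed

lemma int_mod_diff_zero:
  fixes a b :: int
  shows "(a - b) mod int p = 0 \<longleftrightarrow> a mod int p = b mod int p"
  by (simp add: mod_eq_dvd_iff dvd_eq_mod_eq_0[symmetric])

lemma Wsp_eq_fspan:
  assumes p1: "p > 1" and Mok: "\<forall>i<m. \<forall>j<k. M i j < p"
  shows "Wsp p k m M = fspan p (map (bv k m M) [0..<k])"
proof
  show "Wsp p k m M \<subseteq> fspan p (map (bv k m M) [0..<k])"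
  proof
    fix y assume y: "y \<in> Wsp p k m M"
    define cs where "cs = map y [0..<k]"
    have len: "length cs = k" unfolding cs_def by simp
    have yF: "y \<in> Fpn p (k+m)" using y unfolding Wsp_def by simp
    have cp: "\<forall>c\<in>set cs. c < p" using yF unfolding cs_def Fpn_def by auto
    have LB: "lincomb p cs (map (bv k m M) [0..<k]) l = (if l < k then cs ! l else if l < k + m then (\<Sum>j<k. cs ! j * M (l - k) j) mod p else 0)" for l
      using lincomb_bv[OF len cp] by simp
    have "lincomb p cs (map (bv k m M) [0..<k]) = y"
    proof
      fix l
      show "lincomb p cs (map (bv k m M) [0..<k]) l = y l"
      proof (cases "l < k")
        case True then show ?thesis unfolding LB by (simp add: cs_def)
      next
        case False
        show ?thesis
        proof (cases "l < k + m")
          case True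
          define i where "i = l - k"
          have il: "i < m" "l = k + i" using True False unfolding i_def by auto
          have "key p k m M y i = 0" using y unfolding Wsp_def by simp
          then have "(int (y (k+i)) - (\<Sum>j<k. int (M i j) * int (y j))) mod int p = 0"
            using il unfolding key_def by simp
          then have e: "int (y (k+i)) mod int p = (\<Sum>j<k. int (M i j) * int (y j)) mod int p"
            by (simp add: int_mod_diff_zero)
          have yl: "y (k+i) < p" using yF il unfolding Fpn_def by auto
          have "int (y (k+i)) = int ((\<Sum>j<k. y j * M i j) mod p)"
            using e yl by (simp add: of_nat_mod mult.commute)
          then have "y (k+i) = (\<Sum>j<k. y j * M i j) mod p" by simp
          moreover have "(\<Sum>j<k. cs ! j * M i j) = (\<Sum>j<k. y j * M i j)"
            by (rule sum.cong) (auto simp: cs_def)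
          ultimately show ?thesis unfolding LB using il by simp
        next
          case False2: False
          then show ?thesis unfolding LB using yF False unfolding Fpn_def by auto
        qed
      qed
    qed
    then show "y \<in> fspan p (map (bv k m M) [0..<k])" unfolding fspan_def using len cp by force
  qed
next
  show "fspan p (map (bv k m M) [0..<k]) \<subseteq> Wsp p k m M"
  proof
    fix y assume "y \<in> fspan p (map (bv k m M) [0..<k])"
    then obtain cs where len: "length cs = k" and cp: "\<forall>c\<in>set cs. c < p"
      and yy: "y = lincomb p cs (map (bv k m M) [0..<k])" unfolding fspan_def by auto
    have yv: "y = (\<lambda>l. if l < k then cs ! l else if l < k + m then (\<Sum>j<k. cs ! j * M (l - k) j) mod p else 0)"
      using yy lincomb_bv[OF len cp] by simp
    have "y \<in> Fpn p (k+m)" unfolding yv Fpn_def using p1 cp len by auto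
    moreover have "key p k m M y = (\<lambda>_. 0)"
    proof
      fix i
      show "key p k m M y i = 0"
      proof (cases "i < m")
        case True
        have "(\<Sum>j<k. int (M i j) * int (y j)) = (\<Sum>j<k. int (cs ! j * M i j))"
          by (rule sum.cong) (auto simp: yv)
        then have "(\<Sum>j<k. int (M i j) * int (y j)) = int (\<Sum>j<k. cs ! j * M i j)" by simp
        moreover have "int (y (k+i)) = int ((\<Sum>j<k. cs ! j * M i j) mod p)" using True by (simp add: yv)
        ultimately show ?thesis unfolding key_def using True
          by (simp add: int_mod_diff_zero of_nat_mod)
      qed (simp add: key_def)
    qed
    ultimately show "y \<in> Wsp p k m M" unfolding Wsp_def by simp
  qed
qed

lemma bv_Fpn:
  assumes p1: "p > 1" and Mok: "\<forall>i<m. \<forall>j<k. M i j < p" and j: "j < k"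
  shows "bv k m M j \<in> Fpn p (k+m)"
  using assms unfolding bv_def Fpn_def by auto

lemma Wsp_Grass:
  assumes p1: "p > 1" and Mok: "\<forall>i<m. \<forall>j<k. M i j < p"
  shows "Wsp p k m M \<in> Grass p (k+m) k"
proof -
  let ?vs = "map (bv k m M) [0..<k]"
  have "set ?vs \<subseteq> Fpn p (k+m)" using bv_Fpn[OF p1 Mok] by auto
  moreover have "lin_indep p ?vs"
    unfolding lin_indep_def
  proof (intro allI impI)
    fix cs assume H: "length cs = length ?vs \<and> (\<forall>c\<in>set cs. c < p) \<and> lincomb p cs ?vs = (\<lambda>_. 0)"
    then have len: "length cs = k" and cp: "\<forall>c\<in>set cs. c < p" by auto
    have "\<forall>l<k. cs ! l = 0"
    proof (intro allI impI)
      fix l assume l: "l < k"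
      have "lincomb p cs ?vs l = 0" using H by simp
      then show "cs ! l = 0" using lincomb_bv[OF len cp] l by simp
    qed
    then show "\<forall>c\<in>set cs. c = 0" using len by (auto simp: in_set_conv_nth)
  qed
  ultimately show ?thesis unfolding Grass_def using Wsp_eq_fspan[OF p1 Mok] by force
qed

lemma int_mod_add_nat:
  "int ((a + b) mod p) mod int p = (int a + int b) mod int p"
  by (simp add: of_nat_mod)

lemma key_vadd:
  assumes i: "i < m"
  shows "key p k m M (vadd p x z) i = (key p k m M x i + key p k m M z i) mod int p"
proof -
  let ?S = "\<lambda>u. (\<Sum>j<k. int (M i j) * int (u j))"
  have s1: "?S (vadd p x z) mod int p = (?S x + ?S z) mod int p"
  proof -
    have "?S (vadd p x z) mod int p = (\<Sum>j<k. (int (M i j) * int ((x j + z j) mod p)) mod int p) mod int p"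
      unfolding vadd_def by (simp add: mod_sum_eq)
    also have "\<dots> = (\<Sum>j<k. (int (M i j) * int (x j) + int (M i j) * int (z j)) mod int p) mod int p"
    proof -
      have "(int (M i j) * int ((x j + z j) mod p)) mod int p = (int (M i j) * int (x j) + int (M i j) * int (z j)) mod int p" for j
      proof -
        have "(int (M i j) * int ((x j + z j) mod p)) mod int p = (int (M i j) * (int ((x j + z j) mod p) mod int p)) mod int p"
          by (simp add: mod_mult_right_eq)
        also have "\<dots> = (int (M i j) * ((int (x j) + int (z j)) mod int p)) mod int p"
          by (simp only: int_mod_add_nat)
        also have "\<dots> = (int (M i j) * (int (x j) + int (z j))) mod int p"
          by (simp add: mod_mult_right_eq)
        finally show ?thesis by (simp add: distrib_left)
      qed
      then show ?thesis by simp
    qed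
    also have "\<dots> = (?S x + ?S z) mod int p"
      by (simp add: mod_sum_eq sum.distrib)
    finally show ?thesis .
  qed
  have "key p k m M (vadd p x z) i = (int ((x (k+i) + z (k+i)) mod p) - ?S (vadd p x z)) mod int p"
    using i unfolding key_def vadd_def by simp
  also have "\<dots> = ((int (x (k+i)) + int (z (k+i))) - (?S x + ?S z)) mod int p"
    by (rule mod_diff_cong[OF int_mod_add_nat s1])
  also have "\<dots> = ((int (x (k+i)) - ?S x) + (int (z (k+i)) - ?S z)) mod int p"
    by (simp add: algebra_simps)
  also have "\<dots> = (key p k m M x i + key p k m M z i) mod int p"
    using i unfolding key_def by (simp add: mod_add_eq)
  finally show ?thesis .
qed

lemma coset_key:
  assumes "e \<in> coset p x (Wsp p k m M)"
  shows "key p k m M e = key p k m M x"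
proof
  fix i
  obtain z where z: "z \<in> Wsp p k m M" "e = vadd p x z" using assms unfolding coset_def by auto
  have kz: "key p k m M z i = 0" using z unfolding Wsp_def by simp
  show "key p k m M e i = key p k m M x i"
  proof (cases "i < m")
    case True
    then show ?thesis using key_vadd[OF True, of p k M x z] z(2) kz by (simp add: key_def)
  qed (simp add: key_def)
qed

lemma self_in_coset:
  assumes p0: "p > 0" and e: "e \<in> Fpn p (k+m)"
  shows "e \<in> coset p e (Wsp p k m M)"
proof -
  have z: "(\<lambda>_. 0) \<in> Wsp p k m M" unfolding Wsp_def key_def using Fpn_zero[OF p0] by auto
  have "vadd p e (\<lambda>_. 0) = e"
  proof
    fix l show "vadd p e (\<lambda>_. 0) l = e l"
      using e unfolding vadd_def Fpn_def by (cases "l < k+m") auto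
  qed
  then show ?thesis using z unfolding coset_def by force
qed

lemma coset_sub:
  assumes "x \<in> Fpn p n"
  shows "coset p x W \<subseteq> Fpn p n \<or> p = 0 \<or> \<not> W \<subseteq> Fpn p n"
proof (cases "p = 0 \<or> \<not> W \<subseteq> Fpn p n")
  case False
  then have p0: "p > 0" and WF: "W \<subseteq> Fpn p n" by auto
  have "coset p x W \<subseteq> Fpn p n"
  proof
    fix y assume "y \<in> coset p x W"
    then obtain z where z: "z \<in> W" "y = vadd p x z" unfolding coset_def by auto
    show "y \<in> Fpn p n" using z WF assms p0 unfolding vadd_def Fpn_def by auto
  qed
  then show ?thesis by simp
qed simp

lemma card_key_le_proj:
  assumes p0: "p > 0" and E: "E \<subseteq> Fpn p (k+m)"
  shows "card (key p k m M ` E) \<le> card (proj p (k+m) (Wsp p k m M) E)"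
proof -
  let ?W = "Wsp p k m M"
  let ?C = "(\<lambda>e. coset p e ?W) ` E"
  have WF: "?W \<subseteq> Fpn p (k+m)" unfolding Wsp_def by auto
  have Csub: "?C \<subseteq> proj p (k+m) ?W E"
  proof
    fix C assume "C \<in> ?C"
    then obtain e where e: "e \<in> E" "C = coset p e ?W" by blast
    have "e \<in> E \<inter> coset p e ?W" using self_in_coset[OF p0] e E by auto
    then show "C \<in> proj p (k+m) ?W E" unfolding proj_def using e E by blast
  qed
  have finP: "finite (proj p (k+m) ?W E)"
  proof (rule finite_subset[of _ "Pow (Fpn p (k+m))"])
    show "proj p (k+m) ?W E \<subseteq> Pow (Fpn p (k+m))"
      unfolding proj_def using coset_sub[of _ p "k+m" ?W] WF p0 by auto
  qed simp
  have "key p k m M ` E \<subseteq> (\<lambda>C. key p k m M (SOME e. e \<in> C \<inter> E)) ` ?C"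
  proof
    fix y assume "y \<in> key p k m M ` E"
    then obtain e where e: "e \<in> E" "y = key p k m M e" by blast
    have ex: "\<exists>e'. e' \<in> coset p e ?W \<inter> E" using self_in_coset[OF p0] e E by blast
    have "(SOME e'. e' \<in> coset p e ?W \<inter> E) \<in> coset p e ?W \<inter> E" using someI_ex[OF ex] .
    then have "key p k m M (SOME e'. e' \<in> coset p e ?W \<inter> E) = y"
      using coset_key e by blast
    then show "y \<in> (\<lambda>C. key p k m M (SOME e. e \<in> C \<inter> E)) ` ?C" using e by force
  qed
  then have "card (key p k m M ` E) \<le> card ((\<lambda>C. key p k m M (SOME e. e \<in> C \<inter> E)) ` ?C)"
    by (rule card_mono[rotated]) (use finite_subset[OF Csub finP] in simp)
  also have "\<dots> \<le> card ?C" by (rule card_image_le) (use finite_subset[OF Csub finP] in simp)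
  also have "\<dots> \<le> card (proj p (k+m) ?W E)" by (rule card_mono[OF finP Csub])
  finally show ?thesis .
qed

lemma Wsp_inj:
  assumes p1: "p > 1" and Mok: "\<forall>i<m. \<forall>j<k. M i j < p" and M'ok: "\<forall>i<m. \<forall>j<k. M' i j < p"
    and ij: "i < m" "j < k" "M i j \<noteq> M' i j"
  shows "Wsp p k m M \<noteq> Wsp p k m M'"
proof -
  have S: "(\<Sum>j'<k. int (N i j') * int (bv k m M j j')) = int (N i j)" for N
  proof -
    have "(\<Sum>j'<k. int (N i j') * int (bv k m M j j')) = (\<Sum>j'<k. if j' = j then int (N i j) else 0)"
      by (rule sum.cong) (auto simp: bv_def)
    then show ?thesis using ij by simp
  qed
  have b: "bv k m M j (k+i) = M i j" using ij unfolding bv_def by auto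
  have "key p k m M (bv k m M j) = (\<lambda>_. 0)"
  proof
    fix i' show "key p k m M (bv k m M j) i' = 0"
    proof (cases "i' < m")
      case True
      have "(\<Sum>j'<k. int (M i' j') * int (bv k m M j j')) = int (M i' j)"
      proof -
        have "(\<Sum>j'<k. int (M i' j') * int (bv k m M j j')) = (\<Sum>j'<k. if j' = j then int (M i' j) else 0)"
          by (rule sum.cong) (auto simp: bv_def)
        then show ?thesis using ij by simp
      qed
      moreover have "bv k m M j (k+i') = M i' j" using ij True unfolding bv_def by auto
      ultimately show ?thesis unfolding key_def using True by simp
    qed (simp add: key_def)
  qed
  then have inW: "bv k m M j \<in> Wsp p k m M" unfolding Wsp_def using bv_Fpn[OF p1 Mok ij(2)] by simp
  have "key p k m M' (bv k m M j) i = (int (M i j) - int (M' i j)) mod int p"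
    unfolding key_def using ij b S[of M'] by simp
  moreover have "(int (M i j) - int (M' i j)) mod int p \<noteq> 0"
  proof
    assume "(int (M i j) - int (M' i j)) mod int p = 0"
    then have "int (M i j) mod int p = int (M' i j) mod int p" by (simp add: int_mod_diff_zero)
    then show False using Mok M'ok ij by simp
  qed
  ultimately have "bv k m M j \<notin> Wsp p k m M'" unfolding Wsp_def by auto
  then show ?thesis using inW by blast
qed



lemma sum_sq_cs:
  fixes a :: "'a \<Rightarrow> real"
  assumes "finite Y"
  shows "(\<Sum>y\<in>Y. a y)^2 \<le> real (card Y) * (\<Sum>y\<in>Y. (a y)^2)"
proof -
  have "0 \<le> (\<Sum>y\<in>Y. \<Sum>z\<in>Y. (a y - a z)^2)" by (intro sum_nonneg) simp
  also have "(\<Sum>y\<in>Y. \<Sum>z\<in>Y. (a y - a z)^2)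
      = (\<Sum>y\<in>Y. \<Sum>z\<in>Y. (a y)^2 + (a z)^2 - 2 * (a y * a z))"
    by (intro sum.cong refl) (simp add: power2_diff algebra_simps)
  also have "\<dots> = 2 * real (card Y) * (\<Sum>y\<in>Y. (a y)^2) - 2 * (\<Sum>y\<in>Y. a y)^2"
  proof -
    have "(\<Sum>y\<in>Y. \<Sum>z\<in>Y. (a y)^2 + (a z)^2 - 2 * (a y * a z))
        = (\<Sum>y\<in>Y. \<Sum>z\<in>Y. (a y)^2) + (\<Sum>y\<in>Y. \<Sum>z\<in>Y. (a z)^2) - 2 * (\<Sum>y\<in>Y. \<Sum>z\<in>Y. a y * a z)"
      by (simp add: sum.distrib sum_subtractf sum_distrib_left)
    moreover have "(\<Sum>y\<in>Y. \<Sum>z\<in>Y. a y * a z) = (\<Sum>y\<in>Y. a y)^2"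
      by (simp add: power2_eq_square sum_product)
    moreover have "(\<Sum>y\<in>Y. \<Sum>z\<in>Y. (a y)^2) = real (card Y) * (\<Sum>y\<in>Y. (a y)^2)"
      by (simp add: sum_distrib_left mult.commute)
    moreover have "(\<Sum>y\<in>Y. \<Sum>z\<in>Y. (a z)^2) = real (card Y) * (\<Sum>y\<in>Y. (a y)^2)"
      by simp
    ultimately show ?thesis by (simp only:)
  qed
  finally show ?thesis by simp
qed

lemma energy_cs:
  assumes fin: "finite E"
  shows "real (card E)^2 \<le> real (card (f ` E)) * real (card {(u,v)\<in>E\<times>E. f u = f v})"
proof -
  let ?F = "\<lambda>y. {u\<in>E. f u = y}"
  have finY: "finite (f ` E)" using fin by simp
  have E_eq: "E = (\<Union>y\<in>f ` E. ?F y)" by auto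
  have cE: "card E = (\<Sum>y\<in>f ` E. card (?F y))"
    by (subst E_eq, rule card_UN_disjoint) (use fin in auto)
  have P_eq: "{(u,v)\<in>E\<times>E. f u = f v} = (\<Union>y\<in>f ` E. ?F y \<times> ?F y)" by auto
  have cP: "card {(u,v)\<in>E\<times>E. f u = f v} = (\<Sum>y\<in>f ` E. card (?F y) * card (?F y))"
    by (subst P_eq, subst card_UN_disjoint) (use fin in \<open>auto simp: card_cartesian_product\<close>)
  have "real (card E)^2 = (\<Sum>y\<in>f ` E. real (card (?F y)))^2" using cE by simp
  also have "\<dots> \<le> real (card (f ` E)) * (\<Sum>y\<in>f ` E. (real (card (?F y)))^2)"
    by (rule sum_sq_cs[OF finY])
  also have "(\<Sum>y\<in>f ` E. (real (card (?F y)))^2) = real (card {(u,v)\<in>E\<times>E. f u = f v})"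
    using cP by (simp add: power2_eq_square)
  finally show ?thesis .
qed



lemma card_filter_sum:
  assumes "finite A"
  shows "card {x\<in>A. P x} = (\<Sum>x\<in>A. if P x then 1 else 0 :: nat)"
  using assms by (simp add: sum.If_cases Int_def)

lemma double_count:
  assumes "finite S" "finite A"
  shows "(\<Sum>M\<in>S. card {x\<in>A. P M x}) = (\<Sum>x\<in>A. card {M\<in>S. P M x})"
  using assms by (simp add: card_filter_sum sum.swap[of _ S A])

lemma key_eq_iff:
  "key p k m M u = key p k m M v \<longleftrightarrow>
   (\<forall>i<m. (\<Sum>j<k. int (M i j) * (int (u j) - int (v j))) mod int p = (int (u (k+i)) - int (v (k+i))) mod int p)"
proof -
  have "key p k m M u i = key p k m M v i \<longleftrightarrow>
     (\<Sum>j<k. int (M i j) * (int (u j) - int (v j))) mod int p = (int (u (k+i)) - int (v (k+i))) mod int p"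
    if i: "i < m" for i
  proof -
    have "key p k m M u i = key p k m M v i \<longleftrightarrow>
      int p dvd ((int (u (k+i)) - (\<Sum>j<k. int (M i j) * int (u j))) - (int (v (k+i)) - (\<Sum>j<k. int (M i j) * int (v j))))"
      using i unfolding key_def by (simp add: mod_eq_dvd_iff)
    also have "((int (u (k+i)) - (\<Sum>j<k. int (M i j) * int (u j))) - (int (v (k+i)) - (\<Sum>j<k. int (M i j) * int (v j))))
       = (int (u (k+i)) - int (v (k+i))) - (\<Sum>j<k. int (M i j) * (int (u j) - int (v j)))"
      by (simp add: sum_subtractf right_diff_distrib)
    also have "int p dvd \<dots> \<longleftrightarrow> (\<Sum>j<k. int (M i j) * (int (u j) - int (v j))) mod int p = (int (u (k+i)) - int (v (k+i))) mod int p"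
      by (simp add: mod_eq_dvd_iff dvd_diff_commute)
    finally show ?thesis .
  qed
  moreover have "key p k m M u i = key p k m M v i" if "\<not> i < m" for i
    using that unfolding key_def by simp
  note A = calculation
  show ?thesis
  proof
    assume "key p k m M u = key p k m M v"
    then show "\<forall>i<m. (\<Sum>j<k. int (M i j) * (int (u j) - int (v j))) mod int p = (int (u (k+i)) - int (v (k+i))) mod int p"
      using A(1) by metis
  next
    assume H: "\<forall>i<m. (\<Sum>j<k. int (M i j) * (int (u j) - int (v j))) mod int p = (int (u (k+i)) - int (v (k+i))) mod int p"
    show "key p k m M u = key p k m M v"
    proof
      fix i show "key p k m M u i = key p k m M v i"
      proof (cases "i < m")
        case True then show ?thesis using A(1)[OF True] H by blast
      qed (simp add: key_def)
    qed
  qed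
qed

lemma key_neq_same_x:
  assumes EF: "u \<in> Fpn p (k+m)" "v \<in> Fpn p (k+m)" and xs: "\<forall>j<k. u j = v j" and uv: "u \<noteq> v"
  shows "key p k m M u \<noteq> key p k m M v"
proof
  assume eq: "key p k m M u = key p k m M v"
  obtain l where l: "u l \<noteq> v l" using uv by blast
  have lk: "l \<ge> k" using xs l by (meson not_le)
  have lkm: "l < k + m" using EF l unfolding Fpn_def by (metis (mono_tags, lifting) mem_Collect_eq not_le)
  define i where "i = l - k"
  have i: "i < m" "l = k + i" using lk lkm unfolding i_def by auto
  have "(\<Sum>j<k. int (M i j) * (int (u j) - int (v j))) mod int p = (int (u (k+i)) - int (v (k+i))) mod int p"
    using eq i(1) unfolding key_eq_iff by blast
  moreover have "(\<Sum>j<k. int (M i j) * (int (u j) - int (v j))) = 0" using xs by simp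
  ultimately have "int (u (k+i)) mod int p = int (v (k+i)) mod int p"
    by (simp add: int_mod_diff_zero[symmetric])
  moreover have "u (k+i) < p" "v (k+i) < p" using EF i unfolding Fpn_def by auto
  ultimately have "u (k+i) = v (k+i)" by simp
  then show False using l i by simp
qed

lemma primal_energy:
  fixes S :: "(nat \<Rightarrow> nat \<Rightarrow> nat) set" and K :: real
  assumes EF: "E \<subseteq> Fpn p (k+m)" and finS: "finite S" and K0: "K \<ge> 0"
    and hyp: "\<And>u v. u \<in> E \<Longrightarrow> v \<in> E \<Longrightarrow> (\<exists>j<k. u j \<noteq> v j) \<Longrightarrow>
        real (card {M\<in>S. key p k m M u = key p k m M v}) \<le> K"
  shows "(\<Sum>M\<in>S. real (card {(u,v)\<in>E\<times>E. key p k m M u = key p k m M v}))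
    \<le> real (card S) * real (card E) + K * real (card E)^2"
proof -
  have finE: "finite E" using finite_subset[OF EF finite_Fpn] .
  have finEE: "finite (E \<times> E)" using finE by simp
  have set_eq: "{(u,v)\<in>E\<times>E. key p k m M u = key p k m M v} = {x\<in>E\<times>E. key p k m M (fst x) = key p k m M (snd x)}" for M
    by auto
  have "(\<Sum>M\<in>S. card {(u,v)\<in>E\<times>E. key p k m M u = key p k m M v})
      = (\<Sum>x\<in>E\<times>E. card {M\<in>S. key p k m M (fst x) = key p k m M (snd x)})"
  proof -
    have "(\<Sum>M\<in>S. card {(u,v)\<in>E\<times>E. key p k m M u = key p k m M v})
      = (\<Sum>M\<in>S. card {x\<in>E\<times>E. key p k m M (fst x) = key p k m M (snd x)})"
      by (simp only: set_eq)
    also have "\<dots> = (\<Sum>x\<in>E\<times>E. card {M\<in>S. key p k m M (fst x) = key p k m M (snd x)})"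
      by (rule double_count[where P="\<lambda>M x. key p k m M (fst x) = key p k m M (snd x)", OF finS finEE])
    finally show ?thesis .
  qed
  then have L: "(\<Sum>M\<in>S. real (card {(u,v)\<in>E\<times>E. key p k m M u = key p k m M v}))
      = (\<Sum>x\<in>E\<times>E. real (card {M\<in>S. key p k m M (fst x) = key p k m M (snd x)}))"
    by (simp only: of_nat_sum[symmetric])
  have B: "real (card {M\<in>S. key p k m M (fst x) = key p k m M (snd x)}) \<le> (if fst x = snd x then real (card S) else 0) + K"
    if x: "x \<in> E \<times> E" for x
  proof -
    obtain u v where uv: "x = (u,v)" "u \<in> E" "v \<in> E" using x by auto
    show ?thesis
    proof (cases "u = v")
      case True
      then show ?thesis using uv K0 by simp
    next
      case False
      show ?thesis
      proof (cases "\<exists>j<k. u j \<noteq> v j")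
        case True
        then show ?thesis using hyp[OF uv(2,3) True] uv False by simp
      next
        case F2: False
        have e: "{M\<in>S. key p k m M u = key p k m M v} = {}"
          using key_neq_same_x[of u p k m v] uv EF F2 False by auto
        show ?thesis unfolding uv(1) fst_conv snd_conv e using K0 False by simp
      qed
    qed
  qed
  have "(\<Sum>x\<in>E\<times>E. real (card {M\<in>S. key p k m M (fst x) = key p k m M (snd x)}))
      \<le> (\<Sum>x\<in>E\<times>E. (if fst x = snd x then real (card S) else 0) + K)"
    by (rule sum_mono) (rule B)
  also have "\<dots> = real (card S) * real (card {x\<in>E\<times>E. fst x = snd x}) + K * real (card E)^2"
    using finEE by (simp add: sum.distrib sum.If_cases card_cartesian_product power2_eq_square Int_def mult.commute)
  also have "card {x\<in>E\<times>E. fst x = snd x} = card E"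
  proof -
    have "{x\<in>E\<times>E. fst x = snd x} = (\<lambda>u. (u,u)) ` E" by auto
    then show ?thesis by (simp add: card_image inj_on_def)
  qed
  finally show ?thesis using L by simp
qed



lemma HC:
  fixes z :: "nat \<Rightarrow> int"
  assumes pr: "prime p"
  shows "card {\<eta>\<in>Fpn p m. (\<Sum>i<m. z i * int (\<eta> i)) mod int p = 0}
    = (if \<forall>i<m. int p dvd z i then p ^ m else p ^ (m - 1))"
proof (cases "\<forall>i<m. int p dvd z i")
  case True
  have "{\<eta>\<in>Fpn p m. (\<Sum>i<m. z i * int (\<eta> i)) mod int p = 0} = Fpn p m"
  proof -
    have "int p dvd (\<Sum>i<m. z i * int (\<eta> i))" for \<eta>
      by (rule dvd_sum) (use True in auto)
    then show ?thesis by auto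
  qed
  then show ?thesis using True by simp
next
  case False
  then obtain i where i: "i < m" "\<not> int p dvd z i" by blast
  have cl: "r(i:=a) \<in> Fpn p m" if "r \<in> Fpn p m" "a < p" for r a
    using that i(1) unfolding Fpn_def by auto
  have "card {\<eta>\<in>Fpn p m. (\<Sum>l<m. z l * int (\<eta> l)) mod int p = 0 mod int p} * p = card (Fpn p m)"
    by (rule slice[where z=z and c=0 and R="Fpn p m", OF pr i(1) subset_refl cl i(2)])
  then have "card {\<eta>\<in>Fpn p m. (\<Sum>l<m. z l * int (\<eta> l)) mod int p = 0} * p = p ^ m" by simp
  moreover have "m \<ge> 1" using i by simp
  moreover have "p > 0" using prime_gt_1_nat[OF pr] by simp
  ultimately have "card {\<eta>\<in>Fpn p m. (\<Sum>l<m. z l * int (\<eta> l)) mod int p = 0} = p ^ (m - 1)"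
  proof -
    assume A: "card {\<eta>\<in>Fpn p m. (\<Sum>l<m. z l * int (\<eta> l)) mod int p = 0} * p = p ^ m" "m \<ge> 1" "p > 0"
    obtain m' where m': "m = Suc m'" using A(2) by (cases m) auto
    have "card {\<eta>\<in>Fpn p m. (\<Sum>l<m. z l * int (\<eta> l)) mod int p = 0} * p = p ^ m' * p"
      using A(1) m' by (simp add: mult.commute)
    then show ?thesis using A(3) m' by simp
  qed
  then show ?thesis using False by (simp only: if_False)
qed

lemma key_dvd_iff:
  assumes p0: "p > 0"
  shows "(\<forall>i<m. int p dvd (key p k m M u i - key p k m M v i)) \<longleftrightarrow> key p k m M u = key p k m M v"
proof
  assume H: "\<forall>i<m. int p dvd (key p k m M u i - key p k m M v i)"
  show "key p k m M u = key p k m M v"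
  proof
    fix i show "key p k m M u i = key p k m M v i"
    proof (cases "i < m")
      case True
      have "key p k m M u i mod int p = key p k m M v i mod int p"
        using H True by (simp add: mod_eq_dvd_iff)
      then show ?thesis using True unfolding key_def by simp
    qed (simp add: key_def)
  qed
qed simp

lemma dual_count_M:
  assumes pr: "prime p" and EF: "E \<subseteq> Fpn p (k+m)"
  shows "real (\<Sum>\<eta>\<in>Fpn p m. card {x\<in>E\<times>E. (\<Sum>i<m. (key p k m M (fst x) i - key p k m M (snd x) i) * int (\<eta> i)) mod int p = 0})
    = real (p^m) * real (card {x\<in>E\<times>E. key p k m M (fst x) = key p k m M (snd x)})
      + real (p^(m-1)) * (real (card E)^2 - real (card {x\<in>E\<times>E. key p k m M (fst x) = key p k m M (snd x)}))"
proof -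
  have p0: "p > 0" using prime_gt_1_nat[OF pr] by simp
  have finE: "finite E" using finite_subset[OF EF finite_Fpn] .
  have finEE: "finite (E \<times> E)" using finE by simp
  let ?D = "{x\<in>E\<times>E. key p k m M (fst x) = key p k m M (snd x)}"
  have "(\<Sum>\<eta>\<in>Fpn p m. card {x\<in>E\<times>E. (\<Sum>i<m. (key p k m M (fst x) i - key p k m M (snd x) i) * int (\<eta> i)) mod int p = 0})
     = (\<Sum>x\<in>E\<times>E. card {\<eta>\<in>Fpn p m. (\<Sum>i<m. (key p k m M (fst x) i - key p k m M (snd x) i) * int (\<eta> i)) mod int p = 0})"
    by (rule double_count[where P="\<lambda>\<eta> x. (\<Sum>i<m. (key p k m M (fst x) i - key p k m M (snd x) i) * int (\<eta> i)) mod int p = 0", OF finite_Fpn finEE])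
  also have "\<dots> = (\<Sum>x\<in>E\<times>E. if key p k m M (fst x) = key p k m M (snd x) then p ^ m else p ^ (m - 1))"
  proof (rule sum.cong[OF refl])
    fix x
    show "card {\<eta>\<in>Fpn p m. (\<Sum>i<m. (key p k m M (fst x) i - key p k m M (snd x) i) * int (\<eta> i)) mod int p = 0}
      = (if key p k m M (fst x) = key p k m M (snd x) then p ^ m else p ^ (m - 1))"
      unfolding HC[OF pr] key_dvd_iff[OF p0] ..
  qed
  also have "\<dots> = p ^ m * card ?D + p ^ (m - 1) * card (E \<times> E - ?D)"
  proof -
    have "(\<Sum>x\<in>E\<times>E. if key p k m M (fst x) = key p k m M (snd x) then p ^ m else p ^ (m - 1))
       = (\<Sum>x\<in>?D. p ^ m) + (\<Sum>x\<in>E \<times> E - ?D. p ^ (m - 1))"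
    proof -
      have e1: "E \<times> E \<inter> {x. key p k m M (fst x) = key p k m M (snd x)} = ?D" by auto
      have e2: "E \<times> E \<inter> - {x. key p k m M (fst x) = key p k m M (snd x)} = E \<times> E - ?D" by auto
      show ?thesis using sum.If_cases[OF finEE, of "\<lambda>x. key p k m M (fst x) = key p k m M (snd x)" "\<lambda>_. p ^ m" "\<lambda>_. p ^ (m - 1)"]
        unfolding e1 e2 .
    qed
    then show ?thesis by simp
  qed
  finally have eq: "(\<Sum>\<eta>\<in>Fpn p m. card {x\<in>E\<times>E. (\<Sum>i<m. (key p k m M (fst x) i - key p k m M (snd x) i) * int (\<eta> i)) mod int p = 0})
     = p ^ m * card ?D + p ^ (m - 1) * card (E \<times> E - ?D)" .
  have "card (E \<times> E - ?D) = card (E \<times> E) - card ?D"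
    by (rule card_Diff_subset) (use finEE in auto)
  moreover have "card ?D \<le> card (E \<times> E)" by (rule card_mono[OF finEE]) auto
  ultimately have "real (card (E \<times> E - ?D)) = real (card E)^2 - real (card ?D)"
    by (simp add: card_cartesian_product power2_eq_square of_nat_diff)
  then show ?thesis unfolding eq by simp
qed



lemma alg_ident:
  fixes e a dy w dx :: "nat \<Rightarrow> int" and Mi :: "nat \<Rightarrow> nat \<Rightarrow> int"
  shows "(\<Sum>i<m. (a i - (dy i - (\<Sum>j<k. Mi i j * dx j))) * e i) - (\<Sum>j<k. dx j * (w j + (\<Sum>i<m. e i * Mi i j)))
    = (\<Sum>i<m. a i * e i) - ((\<Sum>j<k. dx j * w j) + (\<Sum>i<m. dy i * e i))"
proof -
  have 1: "(\<Sum>i<m. (a i - (dy i - (\<Sum>j<k. Mi i j * dx j))) * e i)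
     = (\<Sum>i<m. a i * e i) - (\<Sum>i<m. dy i * e i) + (\<Sum>i<m. \<Sum>j<k. Mi i j * dx j * e i)"
    by (simp add: algebra_simps sum.distrib sum_subtractf sum_distrib_right sum_distrib_left)
  have 2: "(\<Sum>j<k. dx j * (w j + (\<Sum>i<m. e i * Mi i j)))
     = (\<Sum>j<k. dx j * w j) + (\<Sum>j<k. \<Sum>i<m. dx j * e i * Mi i j)"
    by (simp add: algebra_simps sum.distrib sum_distrib_left)
  have 3: "(\<Sum>i<m. \<Sum>j<k. Mi i j * dx j * e i) = (\<Sum>j<k. \<Sum>i<m. dx j * e i * Mi i j)"
    by (subst sum.swap) (simp add: algebra_simps)
  show ?thesis using 1 2 3 by simp
qed

lemma sum_split_km:
  fixes k m :: nat
  shows "(\<Sum>l<k+m. f l) = (\<Sum>j<k. f j) + (\<Sum>i<m. f (k+i))"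
  by (induction m) (simp_all add: add.assoc)

definition Qf :: "nat \<Rightarrow> nat \<Rightarrow> (nat \<Rightarrow> nat) set \<Rightarrow> (nat \<Rightarrow> nat) \<Rightarrow> nat" where
  "Qf p n E \<xi> = card {x\<in>E\<times>E. (\<Sum>l<n. (int (fst x l) - int (snd x l)) * int (\<xi> l)) mod int p = 0}"

definition join :: "nat \<Rightarrow> nat \<Rightarrow> (nat \<Rightarrow> nat) \<Rightarrow> (nat \<Rightarrow> nat) \<Rightarrow> (nat \<Rightarrow> nat)" where
  "join k m w \<eta> = (\<lambda>l. if l < k then w l else if l < k + m then \<eta> (l - k) else 0)"

definition wM :: "nat \<Rightarrow> nat \<Rightarrow> nat \<Rightarrow> (nat \<Rightarrow> nat) \<Rightarrow> (nat \<Rightarrow> nat \<Rightarrow> nat) \<Rightarrow> (nat \<Rightarrow> nat)" where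
  "wM p k m \<eta> M = (\<lambda>j. if j < k then nat ((- (\<Sum>i<m. int (\<eta> i) * int (M i j))) mod int p) else 0)"

lemma wM_prop:
  assumes p0: "p > 0" and j: "j < k"
  shows "int p dvd (int (wM p k m \<eta> M j) + (\<Sum>i<m. int (\<eta> i) * int (M i j)))"
proof -
  have "int (wM p k m \<eta> M j) = (- (\<Sum>i<m. int (\<eta> i) * int (M i j))) mod int p"
    using p0 j unfolding wM_def by simp
  then have "int (wM p k m \<eta> M j) mod int p = (- (\<Sum>i<m. int (\<eta> i) * int (M i j))) mod int p" by simp
  then have "int p dvd (int (wM p k m \<eta> M j) - (- (\<Sum>i<m. int (\<eta> i) * int (M i j))))"
    by (simp only: mod_eq_dvd_iff)
  then show ?thesis by simp
qed

lemma wM_Fpn: "p > 0 \<Longrightarrow> wM p k m \<eta> M \<in> Fpn p k"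
  unfolding wM_def Fpn_def by (auto simp: nat_less_iff)

lemma key_diff_dvd:
  assumes i: "i < m"
  shows "int p dvd ((key p k m M u i - key p k m M v i) - ((int (u (k+i)) - int (v (k+i))) - (\<Sum>j<k. int (M i j) * (int (u j) - int (v j)))))"
proof -
  let ?A = "int (u (k+i)) - (\<Sum>j<k. int (M i j) * int (u j))"
  let ?B = "int (v (k+i)) - (\<Sum>j<k. int (M i j) * int (v j))"
  have ku: "int p dvd (key p k m M u i - ?A)" using i unfolding key_def
    by (simp add: mod_eq_dvd_iff[symmetric])
  have kv: "int p dvd (key p k m M v i - ?B)" using i unfolding key_def
    by (simp add: mod_eq_dvd_iff[symmetric])
  have eq: "(key p k m M u i - key p k m M v i) - ((int (u (k+i)) - int (v (k+i))) - (\<Sum>j<k. int (M i j) * (int (u j) - int (v j))))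
      = (key p k m M u i - ?A) - (key p k m M v i - ?B)"
    by (simp add: sum_subtractf right_diff_distrib)
  show ?thesis unfolding eq by (rule dvd_diff[OF ku kv])
qed

lemma Q_join:
  assumes p0: "p > 0"
  shows "(\<Sum>i<m. (key p k m M u i - key p k m M v i) * int (\<eta> i)) mod int p = 0
     \<longleftrightarrow> (\<Sum>l<k+m. (int (u l) - int (v l)) * int (join k m (wM p k m \<eta> M) \<eta> l)) mod int p = 0"
proof -
  let ?a = "\<lambda>i. key p k m M u i - key p k m M v i"
  let ?dy = "\<lambda>i. int (u (k+i)) - int (v (k+i))"
  let ?dx = "\<lambda>j. int (u j) - int (v j)"
  let ?e = "\<lambda>i. int (\<eta> i)"
  let ?w = "\<lambda>j. int (wM p k m \<eta> M j)"
  let ?Mi = "\<lambda>i j. int (M i j)"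
  have d1: "int p dvd (\<Sum>i<m. (?a i - (?dy i - (\<Sum>j<k. ?Mi i j * ?dx j))) * ?e i)"
    by (rule dvd_sum) (use key_diff_dvd in auto)
  have d2: "int p dvd (\<Sum>j<k. ?dx j * (?w j + (\<Sum>i<m. ?e i * ?Mi i j)))"
    by (rule dvd_sum) (use wM_prop[OF p0] in auto)
  have "int p dvd ((\<Sum>i<m. ?a i * ?e i) - ((\<Sum>j<k. ?dx j * ?w j) + (\<Sum>i<m. ?dy i * ?e i)))"
    using dvd_diff[OF d1 d2] unfolding alg_ident .
  moreover have "(\<Sum>l<k+m. (int (u l) - int (v l)) * int (join k m (wM p k m \<eta> M) \<eta> l))
      = (\<Sum>j<k. ?dx j * ?w j) + (\<Sum>i<m. ?dy i * ?e i)"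
    unfolding sum_split_km by (simp add: join_def)
  ultimately have "(\<Sum>i<m. ?a i * ?e i) mod int p = (\<Sum>l<k+m. (int (u l) - int (v l)) * int (join k m (wM p k m \<eta> M) \<eta> l)) mod int p"
    by (simp add: mod_eq_dvd_iff)
  then show ?thesis by simp
qed

lemma Qf_lower:
  assumes p0: "p > 0" and finE: "finite E"
  shows "real (card E)^2 \<le> real p * real (Qf p n E \<xi>)"
proof -
  define f where "f u = (\<Sum>l<n. int (u l) * int (\<xi> l)) mod int p" for u :: "nat \<Rightarrow> nat"
  have set_eq: "{(u,v)\<in>E\<times>E. f u = f v} = {x\<in>E\<times>E. (\<Sum>l<n. (int (fst x l) - int (snd x l)) * int (\<xi> l)) mod int p = 0}"
  proof -
    have "f u = f v \<longleftrightarrow> (\<Sum>l<n. (int (u l) - int (v l)) * int (\<xi> l)) mod int p = 0" for u v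
    proof -
      have "(\<Sum>l<n. (int (u l) - int (v l)) * int (\<xi> l)) = (\<Sum>l<n. int (u l) * int (\<xi> l)) - (\<Sum>l<n. int (v l) * int (\<xi> l))"
        by (simp add: sum_subtractf left_diff_distrib)
      then show ?thesis unfolding f_def by (simp add: mod_eq_dvd_iff dvd_eq_mod_eq_0)
    qed
    then show ?thesis by auto
  qed
  have "f ` E \<subseteq> {0..<int p}" unfolding f_def using p0 by auto
  then have cf: "card (f ` E) \<le> p" using card_mono[of "{0..<int p}" "f ` E"] by simp
  have "real (card E)^2 \<le> real (card (f ` E)) * real (card {(u,v)\<in>E\<times>E. f u = f v})"
    by (rule energy_cs[OF finE])
  also have "\<dots> \<le> real p * real (card {(u,v)\<in>E\<times>E. f u = f v})"
    using cf by (intro mult_right_mono) auto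
  finally show ?thesis unfolding set_eq Qf_def .
qed

lemma Qf_sum:
  assumes pr: "prime p" and EF: "E \<subseteq> Fpn p n"
  shows "real (\<Sum>\<xi>\<in>Fpn p n. Qf p n E \<xi>) = real (card E) * real (p^n) + (real (card E)^2 - real (card E)) * real (p^(n-1))"
proof -
  have finE: "finite E" using finite_subset[OF EF finite_Fpn] .
  have finEE: "finite (E \<times> E)" using finE by simp
  let ?D = "{x\<in>E\<times>E. fst x = snd x}"
  have "(\<Sum>\<xi>\<in>Fpn p n. Qf p n E \<xi>)
     = (\<Sum>x\<in>E\<times>E. card {\<xi>\<in>Fpn p n. (\<Sum>l<n. (int (fst x l) - int (snd x l)) * int (\<xi> l)) mod int p = 0})"
    unfolding Qf_def
    by (rule double_count[where P="\<lambda>\<xi> x. (\<Sum>l<n. (int (fst x l) - int (snd x l)) * int (\<xi> l)) mod int p = 0", OF finite_Fpn finEE])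
  also have "\<dots> = (\<Sum>x\<in>E\<times>E. if fst x = snd x then p ^ n else p ^ (n - 1))"
  proof (rule sum.cong[OF refl])
    fix x assume x: "x \<in> E \<times> E"
    have "(\<forall>l<n. int p dvd (int (fst x l) - int (snd x l))) \<longleftrightarrow> fst x = snd x"
    proof
      assume H: "\<forall>l<n. int p dvd (int (fst x l) - int (snd x l))"
      show "fst x = snd x"
      proof
        fix l
        show "fst x l = snd x l"
        proof (cases "l < n")
          case True
          have "int (fst x l) mod int p = int (snd x l) mod int p" using H True by (simp add: mod_eq_dvd_iff)
          moreover have "fst x l < p" "snd x l < p" using x EF True unfolding Fpn_def by auto
          ultimately show ?thesis by simp
        next
          case False
          have "fst x \<in> Fpn p n" "snd x \<in> Fpn p n" using x EF by auto
          then show ?thesis using False unfolding Fpn_def by auto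
        qed
      qed
    qed simp
    then show "card {\<xi>\<in>Fpn p n. (\<Sum>l<n. (int (fst x l) - int (snd x l)) * int (\<xi> l)) mod int p = 0}
      = (if fst x = snd x then p ^ n else p ^ (n - 1))"
      unfolding HC[OF pr] by simp
  qed
  also have "\<dots> = p ^ n * card ?D + p ^ (n - 1) * card (E \<times> E - ?D)"
  proof -
    have e1: "E \<times> E \<inter> {x. fst x = snd x} = ?D" by auto
    have e2: "E \<times> E \<inter> - {x. fst x = snd x} = E \<times> E - ?D" by auto
    show ?thesis using sum.If_cases[OF finEE, of "\<lambda>x. fst x = snd x" "\<lambda>_. p ^ n" "\<lambda>_. p ^ (n - 1)"]
      unfolding e1 e2 by simp
  qed
  finally have eq: "(\<Sum>\<xi>\<in>Fpn p n. Qf p n E \<xi>) = p ^ n * card ?D + p ^ (n - 1) * card (E \<times> E - ?D)" .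
  have cD: "card ?D = card E"
  proof -
    have "?D = (\<lambda>u. (u,u)) ` E" by auto
    then show ?thesis by (simp add: card_image inj_on_def)
  qed
  have "card (E \<times> E - ?D) = card (E \<times> E) - card ?D"
    by (rule card_Diff_subset) (use finEE in auto)
  moreover have "card ?D \<le> card (E \<times> E)" by (rule card_mono[OF finEE]) auto
  ultimately have C: "real (card (E \<times> E - ?D)) = real (card E)^2 - real (card E)"
    using cD by (simp add: card_cartesian_product power2_eq_square of_nat_diff)
  show ?thesis unfolding eq of_nat_add of_nat_mult cD C by (simp add: algebra_simps)
qed



lemma QM_zero:
  "card {x\<in>E\<times>E. (\<Sum>i<m. (key p k m M (fst x) i - key p k m M (snd x) i) * int ((\<lambda>_. 0::nat) i)) mod int p = 0}
   = card E * card E"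
  by (simp add: card_cartesian_product)

lemma QM_join:
  assumes p0: "p > 0"
  shows "card {x\<in>E\<times>E. (\<Sum>i<m. (key p k m M (fst x) i - key p k m M (snd x) i) * int (\<eta> i)) mod int p = 0}
   = Qf p (k+m) E (join k m (wM p k m \<eta> M) \<eta>)"
  unfolding Qf_def using Q_join[OF p0] by presburger

lemma sum_over_classes:
  fixes S :: "(nat \<Rightarrow> nat \<Rightarrow> nat) set" and K :: real
  assumes p0: "p > 0" and finE: "finite E" and finS: "finite S" and K0: "K \<ge> 0"
    and hyp: "\<And>w. w \<in> Fpn p k \<Longrightarrow> real (card {M\<in>S. wM p k m \<eta> M = w}) \<le> K"
  shows "(\<Sum>M\<in>S. real (Qf p (k+m) E (join k m (wM p k m \<eta> M) \<eta>)))
    \<le> real (card S) * real (card E)^2 / real p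
      + K * (\<Sum>w\<in>Fpn p k. real (Qf p (k+m) E (join k m w \<eta>)) - real (card E)^2 / real p)"
proof -
  let ?g = "\<lambda>w. real (Qf p (k+m) E (join k m w \<eta>)) - real (card E)^2 / real p"
  let ?c = "\<lambda>w. real (card {M\<in>S. wM p k m \<eta> M = w})"
  have gnn: "?g w \<ge> 0" for w
  proof -
    have "real (card E)^2 \<le> real p * real (Qf p (k+m) E (join k m w \<eta>))" by (rule Qf_lower[OF p0 finE])
    then show ?thesis using p0 by (simp add: field_simps)
  qed
  have im: "wM p k m \<eta> ` S \<subseteq> Fpn p k" using wM_Fpn[OF p0] by auto
  have "(\<Sum>M\<in>S. real (Qf p (k+m) E (join k m (wM p k m \<eta> M) \<eta>)))
      = (\<Sum>w\<in>Fpn p k. \<Sum>M\<in>{M. M \<in> S \<and> wM p k m \<eta> M = w}. real (Qf p (k+m) E (join k m (wM p k m \<eta> M) \<eta>)))"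
    by (rule sum.group[OF finS finite_Fpn im, symmetric])
  also have "\<dots> = (\<Sum>w\<in>Fpn p k. ?c w * real (Qf p (k+m) E (join k m w \<eta>)))"
  proof (rule sum.cong[OF refl])
    fix w
    have "(\<Sum>M\<in>{M. M \<in> S \<and> wM p k m \<eta> M = w}. real (Qf p (k+m) E (join k m (wM p k m \<eta> M) \<eta>)))
       = (\<Sum>M\<in>{M. M \<in> S \<and> wM p k m \<eta> M = w}. real (Qf p (k+m) E (join k m w \<eta>)))"
      by (rule sum.cong) auto
    then show "(\<Sum>M\<in>{M. M \<in> S \<and> wM p k m \<eta> M = w}. real (Qf p (k+m) E (join k m (wM p k m \<eta> M) \<eta>)))
       = ?c w * real (Qf p (k+m) E (join k m w \<eta>))" by simp
  qed
  also have "\<dots> = (\<Sum>w\<in>Fpn p k. ?c w * ?g w) + (\<Sum>w\<in>Fpn p k. ?c w) * (real (card E)^2 / real p)"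
  proof -
    have "(\<Sum>w\<in>Fpn p k. ?c w * real (Qf p (k+m) E (join k m w \<eta>)))
        = (\<Sum>w\<in>Fpn p k. ?c w * ?g w + ?c w * (real (card E)^2 / real p))"
      by (rule sum.cong) (simp_all add: algebra_simps)
    also have "\<dots> = (\<Sum>w\<in>Fpn p k. ?c w * ?g w) + (\<Sum>w\<in>Fpn p k. ?c w) * (real (card E)^2 / real p)"
      by (simp only: sum.distrib sum_distrib_right)
    finally show ?thesis .
  qed
  finally have EQ: "(\<Sum>M\<in>S. real (Qf p (k+m) E (join k m (wM p k m \<eta> M) \<eta>))) = (\<Sum>w\<in>Fpn p k. ?c w * ?g w) + (\<Sum>w\<in>Fpn p k. ?c w) * (real (card E)^2 / real p)" .
  have Sc: "(\<Sum>w\<in>Fpn p k. ?c w) = real (card S)"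
  proof -
    have G: "(\<Sum>w\<in>Fpn p k. \<Sum>M\<in>{M. M \<in> S \<and> wM p k m \<eta> M = w}. (1::nat)) = (\<Sum>M\<in>S. 1)"
      by (rule sum.group[OF finS finite_Fpn im])
    have "(\<Sum>w\<in>Fpn p k. card {M. M \<in> S \<and> wM p k m \<eta> M = w}) = card S"
      using G unfolding card_eq_sum .
    then have "real (\<Sum>w\<in>Fpn p k. card {M. M \<in> S \<and> wM p k m \<eta> M = w}) = real (card S)" by (rule arg_cong)
    then show ?thesis by (simp only: of_nat_sum)
  qed
  have Mo: "(\<Sum>w\<in>Fpn p k. ?c w * ?g w) \<le> (\<Sum>w\<in>Fpn p k. K * ?g w)"
  proof (rule sum_mono)
    fix w assume w: "w \<in> Fpn p k"
    show "?c w * ?g w \<le> K * ?g w" by (rule mult_right_mono[OF hyp[OF w] gnn])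
  qed
  have X: "(\<Sum>M\<in>S. real (Qf p (k+m) E (join k m (wM p k m \<eta> M) \<eta>)))
      \<le> (\<Sum>w\<in>Fpn p k. K * ?g w) + real (card S) * (real (card E)^2 / real p)"
    using EQ Mo unfolding Sc by linarith
  have Y: "(\<Sum>w\<in>Fpn p k. K * ?g w) = K * (\<Sum>w\<in>Fpn p k. ?g w)" by (rule sum_distrib_left[symmetric])
  have Z: "real (card S) * (real (card E)^2 / real p) = real (card S) * real (card E)^2 / real p" by simp
  show ?thesis using X unfolding Y Z by linarith
qed



lemma join_Fpn:
  assumes "w \<in> Fpn p k" "\<eta> \<in> Fpn p m"
  shows "join k m w \<eta> \<in> Fpn p (k+m)"
  using assms unfolding join_def Fpn_def by auto

lemma join_inj:
  assumes "w \<in> Fpn p k" "\<eta> \<in> Fpn p m" "w' \<in> Fpn p k" "\<eta>' \<in> Fpn p m"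
    and eq: "join k m w \<eta> = join k m w' \<eta>'"
  shows "w = w' \<and> \<eta> = \<eta>'"
proof -
  have e: "join k m w \<eta> l = join k m w' \<eta>' l" for l using eq by simp
  have "w l = w' l" for l
  proof (cases "l < k")
    case True then show ?thesis using e[of l] unfolding join_def by simp
  next
    case False then show ?thesis using assms unfolding Fpn_def by auto
  qed
  moreover have "\<eta> i = \<eta>' i" for i
  proof (cases "i < m")
    case True then show ?thesis using e[of "k+i"] unfolding join_def by simp
  next
    case False then show ?thesis using assms unfolding Fpn_def by auto
  qed
  ultimately show ?thesis by blast
qed

lemma final_alg:
  fixes P Q X A B :: real
  assumes P1: "P > 1" and Q0: "Q > 0"
    and H: "P*Q*X + Q*(A - X) \<le> A + (P*Q - 1)*A/P + B*(P*Q - Q)"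
  shows "X \<le> A/(P*Q) + B"
proof -
  have e1: "(P*Q - 1)*A/P = Q*A - A/P" using P1 by (simp add: field_simps)
  have "Q*(P-1)*X \<le> A - A/P + B*(Q*(P-1))" using H unfolding e1 by (simp add: algebra_simps)
  also have "A - A/P = Q*(P-1)*(A/(P*Q))" using P1 Q0 by (simp add: field_simps)
  finally have "Q*(P-1)*X \<le> Q*(P-1)*(A/(P*Q) + B)" by (simp add: algebra_simps)
  moreover have "Q*(P-1) > 0" using P1 Q0 by simp
  ultimately show ?thesis by (simp add: mult_le_cancel_left_pos)
qed

lemma dual_energy:
  fixes S :: "(nat \<Rightarrow> nat \<Rightarrow> nat) set" and K :: real
  assumes pr: "prime p" and m1: "m \<ge> 1" and EF: "E \<subseteq> Fpn p (k+m)" and finS: "finite S" and K0: "K \<ge> 0"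
    and hyp: "\<And>\<eta> w. \<eta> \<in> Fpn p m \<Longrightarrow> \<eta> \<noteq> (\<lambda>_. 0) \<Longrightarrow> w \<in> Fpn p k \<Longrightarrow> real (card {M\<in>S. wM p k m \<eta> M = w}) \<le> K"
  shows "(\<Sum>M\<in>S. real (card {x\<in>E\<times>E. key p k m M (fst x) = key p k m M (snd x)}))
    \<le> real (card S) * real (card E)^2 / real p ^ m + K * real (card E) * real p ^ k"
proof -
  have p1: "p > 1" using prime_gt_1_nat[OF pr] .
  have p0: "p > 0" using p1 by simp
  have finE: "finite E" using finite_subset[OF EF finite_Fpn] .
  define P where "P = real p"
  define e where "e = real (card E)"
  define s where "s = real (card S)"
  define En where "En M = real (card {x\<in>E\<times>E. key p k m M (fst x) = key p k m M (snd x)})" for M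
  define QM where "QM M \<eta> = real (card {x\<in>E\<times>E. (\<Sum>i<m. (key p k m M (fst x) i - key p k m M (snd x) i) * int (\<eta> i)) mod int p = 0})" for M \<eta>
  define g where "g \<xi> = real (Qf p (k+m) E \<xi>) - e^2 / P" for \<xi>
  have gnn: "g \<xi> \<ge> 0" for \<xi>
  proof -
    have "e^2 \<le> P * real (Qf p (k+m) E \<xi>)" unfolding e_def P_def by (rule Qf_lower[OF p0 finE])
    then show ?thesis unfolding g_def P_def using p0 by (simp add: field_simps)
  qed
  have z0: "(\<lambda>_. 0) \<in> Fpn p m" by (rule Fpn_zero[OF p0])
    have one: "P^m * En M + P^(m-1) * (e^2 - En M) = (\<Sum>\<eta>\<in>Fpn p m. QM M \<eta>)" for M
    using dual_count_M[OF pr EF, of M] unfolding En_def QM_def P_def e_def by (simp add: of_nat_sum)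
    have QM0: "(\<Sum>M\<in>S. QM M (\<lambda>_. 0)) = s * e^2"
    unfolding QM_def s_def e_def using QM_zero[of E m p k] by (simp add: power2_eq_square)
  have QMnz: "(\<Sum>M\<in>S. QM M \<eta>) \<le> s * e^2 / P + K * (\<Sum>w\<in>Fpn p k. g (join k m w \<eta>))"
    if \<eta>: "\<eta> \<in> Fpn p m" "\<eta> \<noteq> (\<lambda>_. 0)" for \<eta>
  proof -
    have "(\<Sum>M\<in>S. QM M \<eta>) = (\<Sum>M\<in>S. real (Qf p (k+m) E (join k m (wM p k m \<eta> M) \<eta>)))"
      unfolding QM_def using QM_join[OF p0] by simp
    also have "\<dots> \<le> s * e^2 / P + K * (\<Sum>w\<in>Fpn p k. g (join k m w \<eta>))"
      unfolding s_def e_def P_def g_def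
      by (rule sum_over_classes[OF p0 finE finS K0 hyp[OF \<eta>]])
    finally show ?thesis .
  qed
  have split: "(\<Sum>\<eta>\<in>Fpn p m. \<Sum>M\<in>S. QM M \<eta>) = (\<Sum>M\<in>S. QM M (\<lambda>_. 0)) + (\<Sum>\<eta>\<in>Fpn p m - {\<lambda>_. 0}. \<Sum>M\<in>S. QM M \<eta>)"
    by (rule sum.remove[OF finite_Fpn z0])
  have B1: "(\<Sum>\<eta>\<in>Fpn p m - {\<lambda>_. 0}. \<Sum>M\<in>S. QM M \<eta>)
      \<le> (\<Sum>\<eta>\<in>Fpn p m - {\<lambda>_. 0}. s * e^2 / P + K * (\<Sum>w\<in>Fpn p k. g (join k m w \<eta>)))"
    by (rule sum_mono) (rule QMnz; auto)
  have cardnz: "card (Fpn p m - {\<lambda>_. 0}) = p^m - 1"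
    using z0 by (simp add: card_Diff_singleton)
    have B2: "(\<Sum>\<eta>\<in>Fpn p m - {\<lambda>_. 0}. \<Sum>w\<in>Fpn p k. g (join k m w \<eta>)) \<le> (\<Sum>\<xi>\<in>Fpn p (k+m). g \<xi>)"
  proof -
    have "(\<Sum>\<eta>\<in>Fpn p m - {\<lambda>_. 0}. \<Sum>w\<in>Fpn p k. g (join k m w \<eta>))
        = (\<Sum>y\<in>(Fpn p m - {\<lambda>_. 0}) \<times> Fpn p k. g (join k m (snd y) (fst y)))"
      by (subst sum.cartesian_product) (simp add: case_prod_beta)
    also have "\<dots> = (\<Sum>\<xi>\<in>(\<lambda>y. join k m (snd y) (fst y)) ` ((Fpn p m - {\<lambda>_. 0}) \<times> Fpn p k). g \<xi>)"
    proof (rule sum.reindex[symmetric, unfolded comp_def])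
      show "inj_on (\<lambda>y. join k m (snd y) (fst y)) ((Fpn p m - {\<lambda>_. 0}) \<times> Fpn p k)"
      proof (rule inj_onI)
        fix x y assume "x \<in> (Fpn p m - {\<lambda>_. 0}) \<times> Fpn p k" "y \<in> (Fpn p m - {\<lambda>_. 0}) \<times> Fpn p k"
          "join k m (snd x) (fst x) = join k m (snd y) (fst y)"
        then show "x = y" using join_inj[of "snd x" p k "fst x" m "snd y" "fst y"] by (auto simp: prod_eq_iff)
      qed
    qed
    also have "\<dots> \<le> (\<Sum>\<xi>\<in>Fpn p (k+m). g \<xi>)"
      by (rule sum_mono2[OF finite_Fpn]) (use join_Fpn gnn in auto)
    finally show ?thesis .
  qed
    have B3: "(\<Sum>\<xi>\<in>Fpn p (k+m). g \<xi>) = e * (P^(k+m) - P^(k+m-1))"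
  proof -
    have "(\<Sum>\<xi>\<in>Fpn p (k+m). g \<xi>) = real (\<Sum>\<xi>\<in>Fpn p (k+m). Qf p (k+m) E \<xi>) - P^(k+m) * (e^2 / P)"
      unfolding g_def by (simp add: sum_subtractf of_nat_sum P_def)
    also have "real (\<Sum>\<xi>\<in>Fpn p (k+m). Qf p (k+m) E \<xi>) = e * P^(k+m) + (e^2 - e) * P^(k+m-1)"
      using Qf_sum[OF pr EF] unfolding e_def P_def by simp
    also have "P^(k+m) * (e^2 / P) = e^2 * P^(k+m-1)"
    proof -
      have "P^(k+m) = P * P^(k+m-1)" using m1 by (simp add: power_eq_if)
      then show ?thesis using p0 unfolding P_def by simp
    qed
    finally show ?thesis by (simp add: algebra_simps)
  qed
    define X where "X = (\<Sum>M\<in>S. En M)"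
  have L: "(\<Sum>M\<in>S. P^m * En M + P^(m-1) * (e^2 - En M)) = P^m * X + P^(m-1) * (s * e^2 - X)"
    unfolding X_def s_def by (simp add: sum.distrib sum_subtractf sum_distrib_left sum_distrib_right algebra_simps)
  have "(\<Sum>M\<in>S. P^m * En M + P^(m-1) * (e^2 - En M)) = (\<Sum>M\<in>S. \<Sum>\<eta>\<in>Fpn p m. QM M \<eta>)"
    using one by simp
  also have "\<dots> = (\<Sum>\<eta>\<in>Fpn p m. \<Sum>M\<in>S. QM M \<eta>)" by (rule sum.swap)
  finally have L2: "P^m * X + P^(m-1) * (s * e^2 - X) = (\<Sum>M\<in>S. QM M (\<lambda>_. 0)) + (\<Sum>\<eta>\<in>Fpn p m - {\<lambda>_. 0}. \<Sum>M\<in>S. QM M \<eta>)"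
    using L split by simp
  have R1: "(\<Sum>\<eta>\<in>Fpn p m - {\<lambda>_. 0}. s * e^2 / P + K * (\<Sum>w\<in>Fpn p k. g (join k m w \<eta>)))
     = (P^m - 1) * (s * e^2 / P) + K * (\<Sum>\<eta>\<in>Fpn p m - {\<lambda>_. 0}. \<Sum>w\<in>Fpn p k. g (join k m w \<eta>))"
  proof -
    have "real (p^m - 1) = P^m - 1" unfolding P_def using p0 by (simp add: of_nat_diff)
    then show ?thesis by (simp add: sum.distrib sum_distrib_left cardnz)
  qed
  have KB: "K * (\<Sum>\<eta>\<in>Fpn p m - {\<lambda>_. 0}. \<Sum>w\<in>Fpn p k. g (join k m w \<eta>)) \<le> K * (e * (P^(k+m) - P^(k+m-1)))"
    using B2 B3 K0 by (simp add: mult_left_mono)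
  have main: "P^m * X + P^(m-1) * (s * e^2 - X) \<le> s * e^2 + (P^m - 1) * (s * e^2 / P) + K * (e * (P^(k+m) - P^(k+m-1)))"
    using L2 QM0 B1 R1 KB by linarith
  define Q where "Q = P^(m-1)"
  have PmQ: "P^m = P * Q" unfolding Q_def using m1 by (simp add: power_eq_if)
  have PnQ: "P^(k+m) - P^(k+m-1) = P^k * (P * Q - Q)"
  proof -
    have "P^(k+m) = P^k * (P * Q)" using PmQ by (simp add: power_add)
    moreover have "P^(k+m-1) = P^k * Q" unfolding Q_def using m1 by (simp add: power_add[symmetric])
    ultimately show ?thesis by (simp add: algebra_simps)
  qed
  have P1: "P > 1" unfolding P_def using p1 by simp
  have Q0: "Q > 0" unfolding Q_def using P1 by simp
  have H: "P*Q*X + Q*(s*e^2 - X) \<le> s*e^2 + (P*Q - 1)*(s*e^2)/P + (K*e*P^k)*(P*Q - Q)"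
    using main unfolding PmQ PnQ Q_def[symmetric] by (simp add: algebra_simps)
  have "X \<le> (s*e^2)/(P*Q) + K*e*P^k" by (rule final_alg[OF P1 Q0 H])
  then show ?thesis unfolding X_def En_def s_def e_def P_def PmQ[unfolded P_def, symmetric] by simp
qed



lemma R_exists:
  fixes \<beta> :: real and b :: nat
  assumes b1: "1 < \<beta>" and bb: "\<beta> \<le> real b" and pr: "prime p"
  shows "\<exists>R. R \<subseteq> Fpn p b \<and> real p powr \<beta> \<le> real (card R) \<and> real (card R) \<le> 2 * real p powr \<beta> \<and>
     (\<forall>z l0 c0. l0 < b \<longrightarrow> \<not> int p dvd z l0 \<longrightarrow>
        card {r\<in>R. (\<Sum>l<b. z l * int (r l)) mod int p = c0 mod int p} * p \<le> b * card R)"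
proof -
  have p1: "p > 1" using prime_gt_1_nat[OF pr] .
  have p0: "p > 0" using p1 by simp
  define c where "c = \<lceil>\<beta>\<rceil>"
  have c2: "c \<ge> 2" unfolding c_def using b1 by linarith
  have cb: "c \<le> int b" unfolding c_def using bb by (simp add: ceiling_le_iff)
  have cbeta: "real_of_int c - 1 < \<beta>" "\<beta> \<le> real_of_int c" unfolding c_def by linarith+
  define j0 where "j0 = nat c - 1"
  define h where "h = j0 - 1"
  have j0r: "real j0 = real_of_int c - 1" unfolding j0_def using c2 by (simp add: of_nat_diff)
  have hj: "Suc h = j0" unfolding h_def j0_def using c2 by simp
  have hb: "h + 2 \<le> b" unfolding h_def j0_def using c2 cb by linarith
  define f where "f = \<beta> - real j0"
  have f01: "0 < f" "f \<le> 1" unfolding f_def using cbeta j0r by linarith+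
  define t where "t = nat \<lceil>real p powr f\<rceil>"
  have pf1: "real p powr f \<ge> 1" using p1 f01 by (simp add: ge_one_powr_ge_zero)
  have pfp: "real p powr f \<le> real p" using p1 f01 powr_mono[of f 1 "real p"] by simp
  have tp: "t \<le> p" unfolding t_def using pfp by (simp add: ceiling_le_iff nat_le_iff)
  have tlo: "real p powr f \<le> real t" unfolding t_def using pf1 by (simp add: le_nat_iff)
  have thi: "real t \<le> 2 * real p powr f"
  proof -
    have "real t < real p powr f + 1" unfolding t_def using pf1 by linarith
    then show ?thesis using pf1 by linarith
  qed
  define R where "R = Rset p h b t"
  have cardR: "card R = p ^ j0 * t" unfolding R_def using Rset_card[OF hb tp] hj by simp
  have pb: "real p powr \<beta> = real p ^ j0 * real p powr f"
  proof -
    have "\<beta> = real j0 + f" unfolding f_def by simp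
    then have "real p powr \<beta> = real p powr real j0 * real p powr f" using p0 by (simp add: powr_add)
    then show ?thesis using p0 by (simp add: powr_realpow)
  qed
  have "R \<subseteq> Fpn p b" unfolding R_def by (rule Rset_sub[OF p0]) (use hb in simp)
  moreover have "real p powr \<beta> \<le> real (card R)"
    unfolding cardR pb using tlo by (simp add: mult_left_mono)
  moreover have "real (card R) \<le> 2 * real p powr \<beta>"
  proof -
    have "real p ^ j0 * real t \<le> real p ^ j0 * (2 * real p powr f)"
      using thi by (intro mult_left_mono) simp_all
    then show ?thesis unfolding cardR pb by (simp add: algebra_simps)
  qed
  moreover have "\<forall>z l0 c0. l0 < b \<longrightarrow> \<not> int p dvd z l0 \<longrightarrow>
        card {r\<in>R. (\<Sum>l<b. z l * int (r l)) mod int p = c0 mod int p} * p \<le> b * card R"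
  proof (intro allI impI)
    fix z l0 c0 assume l0: "l0 < b" and nz: "\<not> int p dvd z l0"
    have "card {r\<in>R. (\<Sum>l<b. z l * int (r l)) mod int p = c0 mod int p} * p \<le> (b - h) * card R"
      unfolding R_def by (rule Rset_hyp[where v=z and cc=c0, OF pr hb tp l0 nz])
    also have "\<dots> \<le> b * card R" by simp
    finally show "card {r\<in>R. (\<Sum>l<b. z l * int (r l)) mod int p = c0 mod int p} * p \<le> b * card R" .
  qed
  ultimately show ?thesis by blast
qed



lemma final_count:
  fixes S :: "(nat \<Rightarrow> nat \<Rightarrow> nat) set" and C N :: real
  assumes p0: "p > 0" and EF: "E \<subseteq> Fpn p (k+m)" and Ene: "E \<noteq> {}" and N0: "N > 0"
    and finS: "finite S" and C0: "C \<ge> 0"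
    and energy: "(\<Sum>M\<in>S. real (card {x\<in>E\<times>E. key p k m M (fst x) = key p k m M (snd x)}))
        \<le> C * real (card S) * (real (card E) + real (card E)^2 / real p ^ m)"
  shows "real (card {W \<in> Wsp p k m ` S. real (card (proj p (k+m) W E)) \<le> N})
    \<le> C * real (card S) * N * (1 / real (card E) + 1 / real p ^ m)"
proof -
  have finE: "finite E" using finite_subset[OF EF finite_Fpn] .
  define e where "e = real (card E)"
  have e0: "e > 0" unfolding e_def using finE Ene by (simp add: card_gt_0_iff)
  define En where "En M = real (card {x\<in>E\<times>E. key p k m M (fst x) = key p k m M (snd x)})" for M
  define Bad where "Bad = {M\<in>S. real (card (key p k m M ` E)) \<le> N}"
  have finB: "finite Bad" unfolding Bad_def using finS by simp
  have sub: "{W \<in> Wsp p k m ` S. real (card (proj p (k+m) W E)) \<le> N} \<subseteq> Wsp p k m ` Bad"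
  proof
    fix W assume "W \<in> {W \<in> Wsp p k m ` S. real (card (proj p (k+m) W E)) \<le> N}"
    then obtain M where M: "M \<in> S" "W = Wsp p k m M" "real (card (proj p (k+m) W E)) \<le> N" by blast
    have "card (key p k m M ` E) \<le> card (proj p (k+m) (Wsp p k m M) E)"
      by (rule card_key_le_proj[OF p0 EF])
    then have "M \<in> Bad" unfolding Bad_def using M by (simp add: le_trans[OF of_nat_mono])
    then show "W \<in> Wsp p k m ` Bad" using M by blast
  qed
  have c1: "card {W \<in> Wsp p k m ` S. real (card (proj p (k+m) W E)) \<le> N} \<le> card Bad"
  proof -
    have "card {W \<in> Wsp p k m ` S. real (card (proj p (k+m) W E)) \<le> N} \<le> card (Wsp p k m ` Bad)"
      by (rule card_mono[OF _ sub]) (use finB in simp)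
    also have "\<dots> \<le> card Bad" by (rule card_image_le[OF finB])
    finally show ?thesis .
  qed
  have pt: "e^2 \<le> N * En M" if M: "M \<in> Bad" for M
  proof -
    have "e^2 \<le> real (card (key p k m M ` E)) * real (card {(u,v)\<in>E\<times>E. key p k m M u = key p k m M v})"
      unfolding e_def by (rule energy_cs[OF finE])
    also have "{(u,v)\<in>E\<times>E. key p k m M u = key p k m M v} = {x\<in>E\<times>E. key p k m M (fst x) = key p k m M (snd x)}"
      by auto
    also have "real (card (key p k m M ` E)) * real (card {x\<in>E\<times>E. key p k m M (fst x) = key p k m M (snd x)}) \<le> N * En M"
      unfolding En_def using M unfolding Bad_def by (intro mult_right_mono) auto
    finally show ?thesis .
  qed
  have "real (card Bad) * e^2 = (\<Sum>M\<in>Bad. e^2)" by simp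
  also have "\<dots> \<le> (\<Sum>M\<in>Bad. N * En M)" by (rule sum_mono) (rule pt)
  also have "\<dots> = N * (\<Sum>M\<in>Bad. En M)" by (simp add: sum_distrib_left)
  also have "(\<Sum>M\<in>Bad. En M) \<le> (\<Sum>M\<in>S. En M)"
    by (rule sum_mono2[OF finS]) (auto simp: Bad_def En_def)
  then have "N * (\<Sum>M\<in>Bad. En M) \<le> N * (\<Sum>M\<in>S. En M)" using N0 by simp
  also have "(\<Sum>M\<in>S. En M) \<le> C * real (card S) * (e + e^2 / real p ^ m)"
    using energy unfolding En_def e_def .
  finally have X: "real (card Bad) * e^2 \<le> N * (C * real (card S) * (e + e^2 / real p ^ m))" using N0 by simp
  have EQ: "N * (C * real (card S) * (e + e^2 / real p ^ m)) = (C * real (card S) * N * (1 / e + 1 / real p ^ m)) * e^2"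
    using e0 by (simp add: field_simps power2_eq_square)
  have "real (card Bad) * e^2 \<le> (C * real (card S) * N * (1 / e + 1 / real p ^ m)) * e^2" using X unfolding EQ .
  then have "real (card Bad) \<le> C * real (card S) * N * (1 / e + 1 / real p ^ m)"
    using e0 by simp
  moreover have "real (card {W \<in> Wsp p k m ` S. real (card (proj p (k+m) W E)) \<le> N}) \<le> real (card Bad)"
    using c1 by (simp only: of_nat_le_iff)
  ultimately show ?thesis unfolding e_def by linarith
qed



definition good_family :: "nat \<Rightarrow> nat \<Rightarrow> nat \<Rightarrow> (nat \<Rightarrow> nat \<Rightarrow> nat) set \<Rightarrow> real \<Rightarrow> bool" where
  "good_family p k m S C \<longleftrightarrow> finite S \<and> (\<forall>M\<in>S. \<forall>i<m. \<forall>j<k. M i j < p)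
     \<and> (\<forall>M\<in>S. \<forall>M'\<in>S. M \<noteq> M' \<longrightarrow> (\<exists>i<m. \<exists>j<k. M i j \<noteq> M' i j))
     \<and> (\<forall>E. E \<subseteq> Fpn p (k+m) \<longrightarrow>
          (\<Sum>M\<in>S. real (card {x\<in>E\<times>E. key p k m M (fst x) = key p k m M (snd x)}))
            \<le> C * real (card S) * (real (card E) + real (card E)^2 / real p ^ m))"

lemma prod_bound:
  fixes B :: "nat \<Rightarrow> 'a set" and c :: real
  assumes "\<And>i. i < m \<Longrightarrow> real (card (B i)) \<le> c"
  shows "real (card (PiE {..<m} B)) \<le> c ^ m"
proof -
  have "real (card (PiE {..<m} B)) = (\<Prod>i<m. real (card (B i)))" by (simp add: card_PiE)
  also have "\<dots> \<le> (\<Prod>i<m. c)" by (rule prod_mono) (use assms in auto)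
  finally show ?thesis by simp
qed

lemma primal_family:
  assumes pr: "prime p" and RF: "R \<subseteq> Fpn p k" and bge: "b \<ge> 1"
    and hypR: "\<forall>z l0 c0. l0 < k \<longrightarrow> \<not> int p dvd z l0 \<longrightarrow>
        card {r\<in>R. (\<Sum>l<k. z l * int (r l)) mod int p = c0 mod int p} * p \<le> b * card R"
  shows "good_family p k m (PiE {..<m} (\<lambda>_. R)) (real b ^ m) \<and> card (PiE {..<m} (\<lambda>_. R)) = card R ^ m"
proof -
  have p1: "p > 1" using prime_gt_1_nat[OF pr] .
  have finR: "finite R" using finite_subset[OF RF finite_Fpn] .
  let ?S = "PiE {..<m} (\<lambda>_. R)"
  have finS: "finite ?S" using finR by (simp add: finite_PiE)
  have cS: "card ?S = card R ^ m" by (simp add: card_PiE)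
  have ent: "\<forall>M\<in>?S. \<forall>i<m. \<forall>j<k. M i j < p"
    using RF unfolding Fpn_def by (auto simp: PiE_def Pi_def)
  have dist: "\<forall>M\<in>?S. \<forall>M'\<in>?S. M \<noteq> M' \<longrightarrow> (\<exists>i<m. \<exists>j<k. M i j \<noteq> M' i j)"
  proof (intro ballI impI)
    fix M M' assume M: "M \<in> ?S" "M' \<in> ?S" "M \<noteq> M'"
    then obtain i where i: "i < m" "M i \<noteq> M' i" by (metis PiE_ext lessThan_iff)
    then obtain j where j: "M i j \<noteq> M' i j" by blast
    have "M i \<in> Fpn p k" "M' i \<in> Fpn p k" using M(1,2) i(1) RF by auto
    then have "j < k" using j unfolding Fpn_def by (metis (mono_tags, lifting) mem_Collect_eq not_le)
    then show "\<exists>i<m. \<exists>j<k. M i j \<noteq> M' i j" using i j by blast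
  qed
  define K where "K = (real b * real (card R) / real p) ^ m"
  have K0: "K \<ge> 0" unfolding K_def by simp
  have energy: "(\<Sum>M\<in>?S. real (card {x\<in>E\<times>E. key p k m M (fst x) = key p k m M (snd x)}))
            \<le> real b ^ m * real (card ?S) * (real (card E) + real (card E)^2 / real p ^ m)"
    if EF: "E \<subseteq> Fpn p (k+m)" for E
  proof -
    have hyp: "real (card {M\<in>?S. key p k m M u = key p k m M v}) \<le> K"
      if uv: "u \<in> E" "v \<in> E" "\<exists>j<k. u j \<noteq> v j" for u v
    proof -
      obtain j0 where j0: "j0 < k" "u j0 \<noteq> v j0" using uv(3) by blast
      define z where "z j = int (u j) - int (v j)" for j
      have nz: "\<not> int p dvd z j0"
      proof
        assume "int p dvd z j0"
        then have "int (u j0) mod int p = int (v j0) mod int p" unfolding z_def by (simp add: mod_eq_dvd_iff)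
        moreover have "u j0 < p" "v j0 < p" using uv EF j0 unfolding Fpn_def by auto
        ultimately show False using j0 by simp
      qed
      define B where "B i = {r\<in>R. (\<Sum>l<k. z l * int (r l)) mod int p = (int (u (k+i)) - int (v (k+i))) mod int p}" for i
      have seq: "{M\<in>?S. key p k m M u = key p k m M v} = PiE {..<m} B"
      proof -
        have "key p k m M u = key p k m M v \<longleftrightarrow> (\<forall>i<m. (\<Sum>l<k. z l * int (M i l)) mod int p = (int (u (k+i)) - int (v (k+i))) mod int p)" for M
        proof -
          have "(\<Sum>j<k. int (M i j) * (int (u j) - int (v j))) = (\<Sum>l<k. z l * int (M i l))" for i
            unfolding z_def by (rule sum.cong) (simp_all add: mult.commute)
          then show ?thesis unfolding key_eq_iff by simp
        qed
        then show ?thesis unfolding B_def by (auto simp: PiE_def Pi_def)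
      qed
      have "real (card (PiE {..<m} B)) \<le> K" unfolding K_def
      proof (rule prod_bound)
        fix i assume "i < m"
        have "card (B i) * p \<le> b * card R" unfolding B_def using hypR j0(1) nz by blast
        then have "real (card (B i)) * real p \<le> real b * real (card R)" by (metis of_nat_le_iff of_nat_mult)
        then show "real (card (B i)) \<le> real b * real (card R) / real p" using p1 by (simp add: field_simps)
      qed
      then show ?thesis unfolding seq .
    qed
    have "(\<Sum>M\<in>?S. real (card {(u,v)\<in>E\<times>E. key p k m M u = key p k m M v}))
        \<le> real (card ?S) * real (card E) + K * real (card E)^2"
      by (rule primal_energy[OF EF finS K0 hyp])
    moreover have "{(u,v)\<in>E\<times>E. key p k m M u = key p k m M v} = {x\<in>E\<times>E. key p k m M (fst x) = key p k m M (snd x)}" for M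
      by auto
    moreover have "K = real b ^ m * real (card ?S) / real p ^ m"
      unfolding K_def cS by (simp add: power_divide power_mult_distrib)
    moreover have "real (card ?S) * real (card E) \<le> real b ^ m * real (card ?S) * real (card E)"
    proof -
      have "1 \<le> real b ^ m" using bge by simp
      from mult_right_mono[OF this, of "real (card ?S) * real (card E)"]
      show ?thesis by (simp add: mult.assoc)
    qed
    ultimately show ?thesis by (simp add: algebra_simps)
  qed
  show ?thesis unfolding good_family_def using finS ent dist energy cS by blast
qed



definition toM :: "(nat \<Rightarrow> nat \<Rightarrow> nat) \<Rightarrow> (nat \<Rightarrow> nat \<Rightarrow> nat)" where
  "toM cols = (\<lambda>i j. cols j i)"

lemma neg_mod_iff:
  fixes a b n :: int
  shows "((- a) mod n = b mod n) \<longleftrightarrow> (a mod n = (- b) mod n)"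
proof -
  have "((- a) mod n = b mod n) \<longleftrightarrow> n dvd (- a - b)" by (simp add: mod_eq_dvd_iff)
  also have "\<dots> \<longleftrightarrow> n dvd (a - (- b))"
  proof -
    have "- a - b = - (a - (- b))" by simp
    then show ?thesis by (simp only: dvd_minus_iff)
  qed
  also have "\<dots> \<longleftrightarrow> (a mod n = (- b) mod n)" by (simp add: mod_eq_dvd_iff)
  finally show ?thesis .
qed

lemma dual_family:
  assumes pr: "prime p" and RF: "R \<subseteq> Fpn p m" and bge: "b \<ge> 1" and m1: "m \<ge> 1"
    and hypR: "\<forall>z l0 c0. l0 < m \<longrightarrow> \<not> int p dvd z l0 \<longrightarrow>
        card {r\<in>R. (\<Sum>l<m. z l * int (r l)) mod int p = c0 mod int p} * p \<le> b * card R"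
  shows "good_family p k m (toM ` PiE {..<k} (\<lambda>_. R)) (real b ^ k) \<and> card (toM ` PiE {..<k} (\<lambda>_. R)) = card R ^ k"
proof -
  have p1: "p > 1" using prime_gt_1_nat[OF pr] .
  have p0: "p > 0" using p1 by simp
  have finR: "finite R" using finite_subset[OF RF finite_Fpn] .
  let ?P = "PiE {..<k} (\<lambda>_. R)"
  let ?S = "toM ` ?P"
  have finP: "finite ?P" using finR by (simp add: finite_PiE)
  have finS: "finite ?S" using finP by simp
  have diff: "\<exists>i<m. \<exists>j<k. toM c i j \<noteq> toM c' i j" if c: "c \<in> ?P" "c' \<in> ?P" "c \<noteq> c'" for c c'
  proof -
    obtain j where j: "j < k" "c j \<noteq> c' j" using c by (metis PiE_ext lessThan_iff)
    then obtain i where i: "c j i \<noteq> c' j i" by blast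
    have "c j \<in> Fpn p m" "c' j \<in> Fpn p m" using c(1,2) j(1) RF by auto
    then have "i < m" using i unfolding Fpn_def by (metis (mono_tags, lifting) mem_Collect_eq not_le)
    then show ?thesis using i j unfolding toM_def by blast
  qed
  have inj: "inj_on toM ?P"
  proof (rule inj_onI)
    fix c c' assume "c \<in> ?P" "c' \<in> ?P" "toM c = toM c'"
    then show "c = c'" using diff by metis
  qed
  have cS: "card ?S = card R ^ k" using inj by (simp add: card_image card_PiE)
  have ent: "\<forall>M\<in>?S. \<forall>i<m. \<forall>j<k. M i j < p"
    using RF unfolding Fpn_def toM_def by (auto simp: PiE_def Pi_def)
  have dist: "\<forall>M\<in>?S. \<forall>M'\<in>?S. M \<noteq> M' \<longrightarrow> (\<exists>i<m. \<exists>j<k. M i j \<noteq> M' i j)"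
    using diff by blast
  define K where "K = (real b * real (card R) / real p) ^ k"
  have K0: "K \<ge> 0" unfolding K_def by simp
  have hyp: "real (card {M\<in>?S. wM p k m \<eta> M = w}) \<le> K"
    if \<eta>: "\<eta> \<in> Fpn p m" "\<eta> \<noteq> (\<lambda>_. 0)" and w: "w \<in> Fpn p k" for \<eta> w
  proof -
    obtain i0 where i0: "\<eta> i0 \<noteq> 0" using \<eta>(2) by blast
    have i0m: "i0 < m" using \<eta>(1) i0 unfolding Fpn_def by (metis (mono_tags, lifting) mem_Collect_eq not_le)
    have nz: "\<not> int p dvd int (\<eta> i0)"
    proof
      have "\<eta> i0 < p" using \<eta>(1) i0m unfolding Fpn_def by auto
      moreover assume "int p dvd int (\<eta> i0)"
      then have "p dvd \<eta> i0" by simp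
      then have "p \<le> \<eta> i0" using i0 by (simp add: dvd_imp_le)
      ultimately show False by simp
    qed
    define B where "B j = {c\<in>R. (\<Sum>l<m. int (\<eta> l) * int (c l)) mod int p = (- int (w j)) mod int p}" for j
    have seq: "{c\<in>?P. wM p k m \<eta> (toM c) = w} = PiE {..<k} B"
    proof -
      have "wM p k m \<eta> (toM c) = w \<longleftrightarrow> (\<forall>j<k. (\<Sum>l<m. int (\<eta> l) * int (c j l)) mod int p = (- int (w j)) mod int p)" for c
      proof -
        have jj: "wM p k m \<eta> (toM c) j = w j \<longleftrightarrow> (\<Sum>l<m. int (\<eta> l) * int (c j l)) mod int p = (- int (w j)) mod int p"
          if j: "j < k" for j
        proof -
          let ?X = "- (\<Sum>i<m. int (\<eta> i) * int (c j i))"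
          have wj: "w j < p" using w j unfolding Fpn_def by auto
          have "wM p k m \<eta> (toM c) j = nat (?X mod int p)" using j unfolding wM_def toM_def by simp
          moreover have "?X mod int p \<ge> 0" using p0 by simp
          ultimately have "wM p k m \<eta> (toM c) j = w j \<longleftrightarrow> ?X mod int p = int (w j)" by auto
          also have "\<dots> \<longleftrightarrow> ?X mod int p = int (w j) mod int p" using wj by simp
          also have "\<dots> \<longleftrightarrow> (\<Sum>l<m. int (\<eta> l) * int (c j l)) mod int p = (- int (w j)) mod int p"
            by (rule neg_mod_iff)
          finally show ?thesis .
        qed
        have out: "wM p k m \<eta> (toM c) j = w j" if "\<not> j < k" for j
          using that w unfolding wM_def Fpn_def by auto
        show ?thesis
        proof
          assume "wM p k m \<eta> (toM c) = w"
          then show "\<forall>j<k. (\<Sum>l<m. int (\<eta> l) * int (c j l)) mod int p = (- int (w j)) mod int p"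
            using jj by metis
        next
          assume H: "\<forall>j<k. (\<Sum>l<m. int (\<eta> l) * int (c j l)) mod int p = (- int (w j)) mod int p"
          show "wM p k m \<eta> (toM c) = w"
          proof
            fix j show "wM p k m \<eta> (toM c) j = w j"
            proof (cases "j < k")
              case True then show ?thesis using jj H by blast
            qed (rule out)
          qed
        qed
      qed
      then show ?thesis unfolding B_def by (auto simp: PiE_def Pi_def)
    qed
    have "{M\<in>?S. wM p k m \<eta> M = w} = toM ` {c\<in>?P. wM p k m \<eta> (toM c) = w}" by auto
    then have "card {M\<in>?S. wM p k m \<eta> M = w} \<le> card {c\<in>?P. wM p k m \<eta> (toM c) = w}"
      using card_image_le[of "{c\<in>?P. wM p k m \<eta> (toM c) = w}" toM] finP by simp
    then have c1: "real (card {M\<in>?S. wM p k m \<eta> M = w}) \<le> real (card (PiE {..<k} B))"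
      unfolding seq by simp
    have "real (card (PiE {..<k} B)) \<le> K" unfolding K_def
    proof (rule prod_bound)
      fix j assume "j < k"
      have "card (B j) * p \<le> b * card R" unfolding B_def
        using hypR[rule_format, of i0 "\<lambda>l. int (\<eta> l)" "- int (w j)", OF i0m nz] by simp
      then have "real (card (B j)) * real p \<le> real b * real (card R)" by (metis of_nat_le_iff of_nat_mult)
      then show "real (card (B j)) \<le> real b * real (card R) / real p" using p1 by (simp add: field_simps)
    qed
    then show ?thesis using c1 by linarith
  qed
  have energy: "(\<Sum>M\<in>?S. real (card {x\<in>E\<times>E. key p k m M (fst x) = key p k m M (snd x)}))
            \<le> real b ^ k * real (card ?S) * (real (card E) + real (card E)^2 / real p ^ m)"
    if EF: "E \<subseteq> Fpn p (k+m)" for E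
  proof -
    have A: "(\<Sum>M\<in>?S. real (card {x\<in>E\<times>E. key p k m M (fst x) = key p k m M (snd x)}))
        \<le> real (card ?S) * real (card E)^2 / real p ^ m + K * real (card E) * real p ^ k"
      by (rule dual_energy[OF pr m1 EF finS K0 hyp])
    have "K * real p ^ k = real b ^ k * real (card ?S)"
      unfolding K_def cS using p0 by (simp add: power_divide power_mult_distrib)
    then have B: "K * real (card E) * real p ^ k = real b ^ k * real (card ?S) * real (card E)"
      by (simp add: algebra_simps)
    have C: "real (card ?S) * real (card E)^2 / real p ^ m \<le> real b ^ k * (real (card ?S) * real (card E)^2 / real p ^ m)"
    proof -
      have "1 \<le> real b ^ k" using bge by simp
      from mult_right_mono[OF this, of "real (card ?S) * real (card E)^2 / real p ^ m"]
      show ?thesis by simp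
    qed
    have T: "real b ^ k * real (card ?S) * (real (card E) + real (card E)^2 / real p ^ m)
       = real b ^ k * real (card ?S) * real (card E) + real b ^ k * (real (card ?S) * real (card E)^2 / real p ^ m)"
      by (simp add: algebra_simps)
    show ?thesis unfolding T using A B C by linarith
  qed
  show ?thesis unfolding good_family_def using finS ent dist energy cS by blast
qed



lemma main_p:
  assumes pr: "prime p" and fam: "good_family p k m S C" and C0: "C \<ge> 0"
  shows "Wsp p k m ` S \<subseteq> Grass p (k+m) k \<and> card (Wsp p k m ` S) = card S \<and>
    (\<forall>E N. E \<subseteq> Fpn p (k+m) \<longrightarrow> E \<noteq> {} \<longrightarrow> N > (0::real) \<longrightarrow>
       real (card {W \<in> Wsp p k m ` S. real (card (proj p (k+m) W E)) \<le> N})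
         \<le> C * real (card (Wsp p k m ` S)) * N * (1 / real (card E) + real p powr (- real m)))"
proof -
  have p1: "p > 1" using prime_gt_1_nat[OF pr] .
  have p0: "p > 0" using p1 by simp
  have finS: "finite S" and ent: "\<forall>M\<in>S. \<forall>i<m. \<forall>j<k. M i j < p"
    and dist: "\<forall>M\<in>S. \<forall>M'\<in>S. M \<noteq> M' \<longrightarrow> (\<exists>i<m. \<exists>j<k. M i j \<noteq> M' i j)"
    and energy: "\<And>E. E \<subseteq> Fpn p (k+m) \<Longrightarrow>
          (\<Sum>M\<in>S. real (card {x\<in>E\<times>E. key p k m M (fst x) = key p k m M (snd x)}))
            \<le> C * real (card S) * (real (card E) + real (card E)^2 / real p ^ m)"
    using fam unfolding good_family_def by auto
  have G: "Wsp p k m ` S \<subseteq> Grass p (k+m) k" using Wsp_Grass[OF p1] ent by blast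
  have inj: "inj_on (Wsp p k m) S"
  proof (rule inj_onI)
    fix M M' assume M: "M \<in> S" "M' \<in> S" "Wsp p k m M = Wsp p k m M'"
    show "M = M'"
    proof (rule ccontr)
      assume "M \<noteq> M'"
      then obtain i j where ij: "i < m" "j < k" "M i j \<noteq> M' i j" using dist M by blast
      have e1: "\<forall>i<m. \<forall>j<k. M i j < p" using ent M(1) by blast
      have e2: "\<forall>i<m. \<forall>j<k. M' i j < p" using ent M(2) by blast
      have "Wsp p k m M \<noteq> Wsp p k m M'" by (rule Wsp_inj[where M=M and M'=M', OF p1 e1 e2 ij])
      then show False using M by simp
    qed
  qed
  have cG: "card (Wsp p k m ` S) = card S" using card_image[OF inj] .
  have pm: "real p powr (- real m) = 1 / real p ^ m"
    using p0 by (simp add: powr_minus powr_realpow divide_inverse)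
  have cnt: "real (card {W \<in> Wsp p k m ` S. real (card (proj p (k+m) W E)) \<le> N})
         \<le> C * real (card (Wsp p k m ` S)) * N * (1 / real (card E) + real p powr (- real m))"
    if E: "E \<subseteq> Fpn p (k+m)" "E \<noteq> {}" and N: "N > 0" for E N
    unfolding cG pm by (rule final_count[OF p0 E N finS C0 energy[OF E(1)]])
  show ?thesis using G cG cnt by blast
qed



lemma powr_pow_real:
  fixes x :: real
  assumes "x > 0"
  shows "(x powr \<beta>) ^ a = x powr (\<beta> * real a)"
proof -
  have "(x powr \<beta>) ^ a = (x powr \<beta>) powr real a" using assms by (simp add: powr_realpow)
  also have "\<dots> = x powr (\<beta> * real a)" by (simp add: powr_powr)
  finally show ?thesis .
qed

theorem theorem1p3:
  fixes n m :: nat and \<alpha> :: real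
  assumes "n \<ge> 2" and "1 \<le> m" and "m \<le> n - 1"
    and "real (min m (n - m)) < \<alpha>" and "\<alpha> \<le> real (m * (n - m))"
  shows "\<exists>C1 C2 C3 :: real. C1 > 0 \<and> C2 > 0 \<and> C3 > 0 \<and>
    (\<forall>p :: nat. prime p \<longrightarrow>
      (\<exists>G. G \<subseteq> Grass p n (n - m) \<and>
           C1 * real p powr \<alpha> \<le> real (card G) \<and> real (card G) \<le> C2 * real p powr \<alpha> \<and>
           (\<forall>E N. E \<subseteq> Fpn p n \<longrightarrow> E \<noteq> {} \<longrightarrow> N > (0::real) \<longrightarrow>
              real (card {W \<in> G. real (card (proj p n W E)) \<le> N})
                \<le> C3 * real (card G) * N * (1 / real (card E) + real p powr (- real m)))))"
proof -
  define k where "k = n - m"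
  have n: "n = k + m" using assms(3) assms(1) unfolding k_def by simp
  have k1: "k \<ge> 1" using assms(3) assms(1) unfolding k_def by simp
  have m1: "m \<ge> 1" using assms(2) .
  define a where "a = min m k"
  define b where "b = max m k"
  have a1: "a \<ge> 1" unfolding a_def using k1 m1 by simp
  have b1: "b \<ge> 1" unfolding b_def using k1 m1 by simp
  have ab: "a * b = m * k" unfolding a_def b_def by (cases "m \<le> k") (auto simp: min_def max_def)
  have alo: "real a < \<alpha>" using assms(4) unfolding a_def k_def by simp
  have ahi: "\<alpha> \<le> real (a * b)" using assms(5) ab unfolding k_def by simp
  define \<beta> where "\<beta> = \<alpha> / real a"
  have ar: "real a > 0" using a1 by simp
  have beta1: "1 < \<beta>" unfolding \<beta>_def using alo ar by (simp add: field_simps)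
  have betab: "\<beta> \<le> real b" unfolding \<beta>_def using ahi ar by (simp add: field_simps)
  have alpha_eq: "\<beta> * real a = \<alpha>" unfolding \<beta>_def using ar by simp
  have fam_ex: "\<exists>S. good_family p k m S (real b ^ a) \<and> real p powr \<alpha> \<le> real (card S) \<and> real (card S) \<le> 2 ^ a * real p powr \<alpha>"
    if pr: "prime p" for p
  proof -
    have p0: "real p > 0" using prime_gt_1_nat[OF pr] by simp
    obtain R where R: "R \<subseteq> Fpn p b" "real p powr \<beta> \<le> real (card R)" "real (card R) \<le> 2 * real p powr \<beta>"
      and hypR: "\<forall>z l0 c0. l0 < b \<longrightarrow> \<not> int p dvd z l0 \<longrightarrow>
        card {r\<in>R. (\<Sum>l<b. z l * int (r l)) mod int p = c0 mod int p} * p \<le> b * card R"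
      using R_exists[OF beta1 betab pr] by blast
    have "\<exists>S. good_family p k m S (real b ^ a) \<and> card S = card R ^ a"
    proof (cases "m \<le> k")
      case True
      then have ab2: "a = m" "b = k" unfolding a_def b_def by auto
      have RF: "R \<subseteq> Fpn p k" using R(1) ab2 by simp
      have hR: "\<forall>z l0 c0. l0 < k \<longrightarrow> \<not> int p dvd z l0 \<longrightarrow>
        card {r\<in>R. (\<Sum>l<k. z l * int (r l)) mod int p = c0 mod int p} * p \<le> k * card R"
        using hypR ab2 by simp
      have "good_family p k m (PiE {..<m} (\<lambda>_. R)) (real k ^ m) \<and> card (PiE {..<m} (\<lambda>_. R)) = card R ^ m"
        by (rule primal_family[where k=k and m=m and b=k, OF pr RF k1 hR])
      then show ?thesis using ab2 by blast
    next
      case False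
      then have ab2: "a = k" "b = m" unfolding a_def b_def by auto
      have RF: "R \<subseteq> Fpn p m" using R(1) ab2 by simp
      have hR: "\<forall>z l0 c0. l0 < m \<longrightarrow> \<not> int p dvd z l0 \<longrightarrow>
        card {r\<in>R. (\<Sum>l<m. z l * int (r l)) mod int p = c0 mod int p} * p \<le> m * card R"
        using hypR ab2 by simp
      have "good_family p k m (toM ` PiE {..<k} (\<lambda>_. R)) (real m ^ k) \<and> card (toM ` PiE {..<k} (\<lambda>_. R)) = card R ^ k"
        by (rule dual_family[where k=k and m=m and b=m, OF pr RF m1 m1 hR])
      then show ?thesis using ab2 by blast
    qed
    then obtain S where S: "good_family p k m S (real b ^ a)" "card S = card R ^ a" by blast
    have lo: "real p powr \<alpha> \<le> real (card S)"
    proof -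
      have "(real p powr \<beta>) ^ a \<le> real (card R) ^ a" by (rule power_mono[OF R(2)]) simp
      then show ?thesis using S(2) powr_pow_real[OF p0, of \<beta> a] alpha_eq by simp
    qed
    have hi: "real (card S) \<le> 2 ^ a * real p powr \<alpha>"
    proof -
      have "real (card R) ^ a \<le> (2 * real p powr \<beta>) ^ a" by (rule power_mono[OF R(3)]) simp
      then show ?thesis using S(2) powr_pow_real[OF p0, of \<beta> a] alpha_eq by (simp add: power_mult_distrib)
    qed
    show ?thesis using S(1) lo hi by blast
  qed
  show ?thesis
  proof (rule exI[of _ 1], rule exI[of _ "2 ^ a"], rule exI[of _ "real b ^ a"], intro conjI allI impI)
    show "(1::real) > 0" by simp
    show "(2::real) ^ a > 0" by simp
    show "real b ^ a > 0" using b1 by simp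
    fix p :: nat assume pr: "prime p"
    obtain S where S: "good_family p k m S (real b ^ a)" "real p powr \<alpha> \<le> real (card S)" "real (card S) \<le> 2 ^ a * real p powr \<alpha>"
      using fam_ex[OF pr] by blast
    have M: "Wsp p k m ` S \<subseteq> Grass p (k+m) k \<and> card (Wsp p k m ` S) = card S \<and>
      (\<forall>E N. E \<subseteq> Fpn p (k+m) \<longrightarrow> E \<noteq> {} \<longrightarrow> N > (0::real) \<longrightarrow>
       real (card {W \<in> Wsp p k m ` S. real (card (proj p (k+m) W E)) \<le> N})
         \<le> real b ^ a * real (card (Wsp p k m ` S)) * N * (1 / real (card E) + real p powr (- real m)))"
      by (rule main_p[OF pr S(1)]) simp
    have nm: "n - m = k" unfolding k_def ..
    show "\<exists>G. G \<subseteq> Grass p n (n - m) \<and>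
           1 * real p powr \<alpha> \<le> real (card G) \<and> real (card G) \<le> 2 ^ a * real p powr \<alpha> \<and>
           (\<forall>E N. E \<subseteq> Fpn p n \<longrightarrow> E \<noteq> {} \<longrightarrow> N > (0::real) \<longrightarrow>
              real (card {W \<in> G. real (card (proj p n W E)) \<le> N})
                \<le> real b ^ a * real (card G) * N * (1 / real (card E) + real p powr (- real m)))"
    proof (rule exI[where x="Wsp p k m ` S"])
      have cG: "card (Wsp p k m ` S) = card S" using M by blast
      have M3: "\<forall>E N. E \<subseteq> Fpn p (k+m) \<longrightarrow> E \<noteq> {} \<longrightarrow> N > (0::real) \<longrightarrow>
       real (card {W \<in> Wsp p k m ` S. real (card (proj p (k+m) W E)) \<le> N})
         \<le> real b ^ a * real (card (Wsp p k m ` S)) * N * (1 / real (card E) + real p powr (- real m))"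
        using M by blast
      show "Wsp p k m ` S \<subseteq> Grass p n (n - m) \<and>
           1 * real p powr \<alpha> \<le> real (card (Wsp p k m ` S)) \<and> real (card (Wsp p k m ` S)) \<le> 2 ^ a * real p powr \<alpha> \<and>
           (\<forall>E N. E \<subseteq> Fpn p n \<longrightarrow> E \<noteq> {} \<longrightarrow> N > (0::real) \<longrightarrow>
              real (card {W \<in> Wsp p k m ` S. real (card (proj p n W E)) \<le> N})
                \<le> real b ^ a * real (card (Wsp p k m ` S)) * N * (1 / real (card E) + real p powr (- real m)))"
        unfolding nm cG using M M3 S(2,3) unfolding n cG by simp
    qed
  qed
qed


end
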